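(* There is no effective procedure that, given an index for a computable subtree $T$ of $2^{<\omega}$ of positive measure and a positive rational $q$, produces an index for a computable subtree $S$ of $2^{<\omega}$ of measure at least $q$ together with an $e\in\omega$ such that $\Phi_e^A$ is an infinite path through $T$ for every infinite path $A$ through $S$.
   Context: The measure of a tree $T\subseteq 2^{<\omega}$ is the uniform measure of its set of infinite paths. $\Phi_e$ denotes the $e$-th Turing functional in a standard enumeration. *)

theory Defs
  imports "HOL-Probability.Probability" "HOL-Library.Nat_Bijection"
begin

text \<open>Unary partial recursive function terms over the Cantor pairing
  prod_encode, with an oracle query instruction Orc.  Relative to an
  oracle A :: nat => bool these compute exactly the A-partial-recursive
  functions; with a constant oracle they compute exactly the partial
  recursive functions.\<close>

datatype recf =
    Zf | Sf | Fst | Snd | Orc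
  | Pairf recf recf
  | Comp recf recf
  | Rec recf recf
  | Mu recf

inductive eval :: "(nat \<Rightarrow> bool) \<Rightarrow> recf \<Rightarrow> nat \<Rightarrow> nat \<Rightarrow> bool" where
  zero: "eval A Zf x 0"
| succ: "eval A Sf x (Suc x)"
| fst:  "eval A Fst x (fst (prod_decode x))"
| snd:  "eval A Snd x (snd (prod_decode x))"
| orc:  "eval A Orc x (if A x then 1 else 0)"
| pair: "eval A f x y \<Longrightarrow> eval A g x z \<Longrightarrow> eval A (Pairf f g) x (prod_encode (y, z))"
| comp: "eval A g x y \<Longrightarrow> eval A f y z \<Longrightarrow> eval A (Comp f g) x z"
| rec0: "eval A f x y \<Longrightarrow> eval A (Rec f g) (prod_encode (x, 0)) y"
| recS: "eval A (Rec f g) (prod_encode (x, n)) y \<Longrightarrow>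
         eval A g (prod_encode (x, prod_encode (n, y))) z \<Longrightarrow>
         eval A (Rec f g) (prod_encode (x, Suc n)) z"
| mu:   "eval A f (prod_encode (x, n)) 0 \<Longrightarrow>
         (\<forall>m<n. \<exists>y. y \<noteq> 0 \<and> eval A f (prod_encode (x, m)) y) \<Longrightarrow>
         eval A (Mu f) x n"

definition eval0 :: "recf \<Rightarrow> nat \<Rightarrow> nat \<Rightarrow> bool" where
  "eval0 p x y \<longleftrightarrow> eval (\<lambda>_. False) p x y"

text \<open>Goedel numbering of programs (injective, computable).  The index of
  a program p is enc p; Phi_e is the functional computed by the program with index e.\<close>
primrec enc :: "recf \<Rightarrow> nat" where
  "enc Zf = prod_encode (0, 0)"
| "enc Sf = prod_encode (1, 0)"
| "enc Fst = prod_encode (2, 0)"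
| "enc Snd = prod_encode (3, 0)"
| "enc Orc = prod_encode (4, 0)"
| "enc (Pairf f g) = prod_encode (5, prod_encode (enc f, enc g))"
| "enc (Comp f g) = prod_encode (6, prod_encode (enc f, enc g))"
| "enc (Rec f g) = prod_encode (7, prod_encode (enc f, enc g))"
| "enc (Mu f) = prod_encode (8, enc f)"

primrec scode :: "bool list \<Rightarrow> nat" where
  "scode [] = 0"
| "scode (b # s) = Suc (prod_encode (if b then 1 else 0, scode s))"

definition is_tree :: "bool list set \<Rightarrow> bool" where
  "is_tree T \<longleftrightarrow> (\<forall>s t. s @ t \<in> T \<longrightarrow> s \<in> T)"

text \<open>The program p decides the set of strings T (p is total and 0/1-valued
  with characteristic function of T); so enc p is an index for the computable set T.\<close>
definition decides :: "recf \<Rightarrow> bool list set \<Rightarrow> bool" where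
  "decides p T \<longleftrightarrow> (\<forall>s. eval0 p (scode s) (if s \<in> T then 1 else 0))"

definition paths :: "bool list set \<Rightarrow> (nat \<Rightarrow> bool) set" where
  "paths T = {A. \<forall>n. map A [0..<n] \<in> T}"

definition coin :: "(nat \<Rightarrow> bool) measure" where
  "coin = PiM UNIV (\<lambda>_::nat. measure_pmf (bernoulli_pmf (1/2)))"

definition tree_measure :: "bool list set \<Rightarrow> real" where
  "tree_measure T = measure coin (paths T)"

definition computes_with_oracle :: "recf \<Rightarrow> (nat \<Rightarrow> bool) \<Rightarrow> (nat \<Rightarrow> bool) \<Rightarrow> bool" where
  "computes_with_oracle p A X \<longleftrightarrow> (\<forall>n. eval A p n (if X n then 1 else 0))"

end

theory Submission
  imports Defs
begin

lemma eval_det: "eval A p x y \<Longrightarrow> eval A p x y' \<Longrightarrow> y = y'"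
proof (induction arbitrary: y' rule: eval.induct)
  case (pair A f x y g z)
  from pair.prems show ?case
    by (cases rule: eval.cases) (auto dest: pair.IH)
next
  case (comp A g x y f z)
  from comp.prems show ?case
    by (cases rule: eval.cases) (auto dest: comp.IH)
next
  case (rec0 A f x y g)
  from rec0.prems show ?case
    by (cases rule: eval.cases) (auto dest: rec0.IH)
next
  case (recS A f g x n y z)
  from recS.prems show ?case
    by (cases rule: eval.cases) (auto dest: recS.IH)
next
  case (mu A f x n)
  from mu.prems show ?case
  proof (cases rule: eval.cases)
    case mu
    then have e: "eval A f (prod_encode (x, y')) 0" and all: "\<forall>m<y'. \<exists>y. y \<noteq> 0 \<and> eval A f (prod_encode (x, m)) y"
      by auto
    show ?thesis
    proof (rule ccontr)
      assume "n \<noteq> y'"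
      then consider "n < y'" | "y' < n" by linarith
      then show False
      proof cases
        case 1
        with all obtain v where "v \<noteq> 0" "eval A f (prod_encode (x, n)) v" by auto
        with mu.IH(1) show False by auto
      next
        case 2
        with mu.IH(2) obtain v where "v \<noteq> 0" "\<forall>z. eval A f (prod_encode (x, y')) z \<longrightarrow> v = z" by auto
        with e show False by auto
      qed
    qed
  qed
qed (auto elim: eval.cases)


section \<open>Programs computing total functions\<close>

abbreviation pe :: "nat \<Rightarrow> nat \<Rightarrow> nat" where "pe a b \<equiv> prod_encode (a, b)"
definition pf :: "nat \<Rightarrow> nat" where "pf n = fst (prod_decode n)"
definition ps :: "nat \<Rightarrow> nat" where "ps n = snd (prod_decode n)"
lemma pf_pe[simp]: "pf (pe a b) = a" by (simp add: pf_def)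
lemma ps_pe[simp]: "ps (pe a b) = b" by (simp add: ps_def)
lemma pe_pf_ps[simp]: "pe (pf v) (ps v) = v" by (simp add: pf_def ps_def)

definition bv :: "bool \<Rightarrow> nat" where "bv b = (if b then 1 else 0)"
lemma bv_simps[simp]: "bv True = 1" "bv False = 0" "bv b = 0 \<longleftrightarrow> \<not> b" "bv b = 1 \<longleftrightarrow> b"
  by (auto simp: bv_def)

definition computes :: "recf \<Rightarrow> (nat \<Rightarrow> nat) \<Rightarrow> bool" where
  "computes P f \<longleftrightarrow> (\<forall>A x. eval A P x (f x))"

lemma computesD: "computes P f \<Longrightarrow> eval A P x (f x)" by (simp add: computes_def)

lemma computes_cong: "computes P f \<Longrightarrow> (\<And>x. f x = g x) \<Longrightarrow> computes P g"
  by (simp add: computes_def)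

primrec constp :: "nat \<Rightarrow> recf" where
  "constp 0 = Zf"
| "constp (Suc n) = Comp Sf (constp n)"

definition "IdP = Pairf Fst Snd"

lemma c_id: "computes IdP (\<lambda>z. z)"
  unfolding computes_def IdP_def
proof (intro allI)
  fix A x
  have "eval A (Pairf Fst Snd) x (prod_encode (fst (prod_decode x), snd (prod_decode x)))"
    by (intro eval.intros)
  then show "eval A (Pairf Fst Snd) x x" by simp
qed

lemma c_const: "computes (constp n) (\<lambda>z. n)"
  unfolding computes_def
  by (induction n) (auto intro: eval.intros)

lemma c_comp: "computes P f \<Longrightarrow> computes Q g \<Longrightarrow> computes (Comp P Q) (\<lambda>z. f (g z))"
  unfolding computes_def by (blast intro: eval.comp)

lemma c_pair: "computes P f \<Longrightarrow> computes Q g \<Longrightarrow> computes (Pairf P Q) (\<lambda>z. pe (f z) (g z))"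
  unfolding computes_def by (auto intro: eval.intros)

lemma c_Fst: "computes Fst pf" unfolding computes_def pf_def by (auto intro: eval.intros)
lemma c_Snd: "computes Snd ps" unfolding computes_def ps_def by (auto intro: eval.intros)
lemma c_Sf: "computes Sf Suc" unfolding computes_def by (auto intro: eval.intros)

lemma c_fst: "computes Q g \<Longrightarrow> computes (Comp Fst Q) (\<lambda>z. pf (g z))"
  by (rule c_comp[OF c_Fst])
lemma c_snd: "computes Q g \<Longrightarrow> computes (Comp Snd Q) (\<lambda>z. ps (g z))"
  by (rule c_comp[OF c_Snd])
lemma c_suc: "computes Q g \<Longrightarrow> computes (Comp Sf Q) (\<lambda>z. Suc (g z))"
  by (rule c_comp[OF c_Sf])

primrec recfn :: "(nat \<Rightarrow> nat) \<Rightarrow> (nat \<Rightarrow> nat) \<Rightarrow> nat \<Rightarrow> nat \<Rightarrow> nat" where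
  "recfn f g x 0 = f x"
| "recfn f g x (Suc n) = g (pe x (pe n (recfn f g x n)))"

lemma c_rec: assumes "computes P f" "computes Q g"
  shows "computes (Rec P Q) (\<lambda>v. recfn f g (pf v) (ps v))"
  unfolding computes_def
proof (intro allI)
  fix A v
  have "eval A (Rec P Q) (pe x n) (recfn f g x n)" for x n
    by (induction n) (auto intro: eval.intros computesD[OF assms(1)] computesD[OF assms(2)])
  from this[of "pf v" "ps v"] show "eval A (Rec P Q) v (recfn f g (pf v) (ps v))" by simp
qed

lemma c_rec0: assumes "computes P f" "computes Q g" "computes R h"
  shows "computes (Comp (Rec P Q) (Pairf R IdP)) (\<lambda>z. recfn f g (h z) z)"
  using c_comp[OF c_rec[OF assms(1,2)] c_pair[OF assms(3) c_id]] by simp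


lemma ex_cong: "\<exists>P. computes P f \<Longrightarrow> (\<And>x. f x = g x) \<Longrightarrow> \<exists>P. computes P g"
  using computes_cong by blast

lemma someP: "\<exists>P. computes P f \<Longrightarrow> computes (SOME P. computes P f) f"
  by (rule someI_ex)

lemma c_recz: assumes "computes P f" "computes Q g" "computes R h"
  shows "computes (Comp (Rec P Q) (Pairf R IdP)) (\<lambda>z. recfn f g (h z) z)"
  using c_comp[OF c_rec[OF assms(1,2)] c_pair[OF assms(3) c_id]] by simp

lemma ex_pred: "\<exists>P. computes P (\<lambda>n. n - 1)"
proof -
  have "computes (Comp (Rec (constp 0) (Comp Fst (Comp Snd IdP))) (Pairf (constp 0) IdP))
     (\<lambda>z. recfn (\<lambda>_. 0) (\<lambda>w. pf (ps w)) 0 z)"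
    by (intro c_recz c_const c_fst c_snd c_id)
  moreover have "recfn (\<lambda>_. 0) (\<lambda>w. pf (ps w)) 0 z = z - 1" for z by (cases z) auto
  ultimately show ?thesis by (auto intro: computes_cong)
qed

definition "PredP = (SOME P. computes P (\<lambda>n. n - 1))"
lemma c_Pred: "computes PredP (\<lambda>n. n - 1)" unfolding PredP_def by (rule someP[OF ex_pred])

lemma ex_bin: assumes "computes G g" and "\<And>a n. recfn f g a n = h a n" and "computes F f"
  shows "\<exists>P. computes P (\<lambda>v. h (pf v) (ps v))"
  using c_rec[OF assms(3,1)] assms(2) by (auto intro: computes_cong)

lemma ex_add: "\<exists>P. computes P (\<lambda>v. pf v + ps v)"
proof (rule ex_bin)
  show "computes (Comp Sf (Comp Snd (Comp Snd IdP))) (\<lambda>w. Suc (ps (ps w)))" by (intro c_suc c_snd c_id)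
  show "recfn (\<lambda>x. x) (\<lambda>w. Suc (ps (ps w))) a n = a + n" for a n by (induction n) auto
qed (rule c_id)
definition "AddP = (SOME P. computes P (\<lambda>v. pf v + ps v))"
lemma c_Add: "computes AddP (\<lambda>v. pf v + ps v)" unfolding AddP_def by (rule someP[OF ex_add])

lemma c_add: "computes P f \<Longrightarrow> computes Q g \<Longrightarrow> computes (Comp AddP (Pairf P Q)) (\<lambda>z. f z + g z)"
  using c_comp[OF c_Add c_pair] by simp

lemma c_pred: "computes Q g \<Longrightarrow> computes (Comp PredP Q) (\<lambda>z. g z - 1)"
  using c_comp[OF c_Pred] by simp

lemma ex_sub: "\<exists>P. computes P (\<lambda>v. pf v - ps v)"
proof (rule ex_bin)
  show "computes (Comp PredP (Comp Snd (Comp Snd IdP))) (\<lambda>w. ps (ps w) - 1)" by (intro c_pred c_snd c_id)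
  show "recfn (\<lambda>x. x) (\<lambda>w. ps (ps w) - 1) a n = a - n" for a n by (induction n) auto
qed (rule c_id)
definition "SubP = (SOME P. computes P (\<lambda>v. pf v - ps v))"
lemma c_Sub: "computes SubP (\<lambda>v. pf v - ps v)" unfolding SubP_def by (rule someP[OF ex_sub])
lemma c_sub: "computes P f \<Longrightarrow> computes Q g \<Longrightarrow> computes (Comp SubP (Pairf P Q)) (\<lambda>z. f z - g z)"
  using c_comp[OF c_Sub c_pair] by simp

lemma ex_mul: "\<exists>P. computes P (\<lambda>v. pf v * ps v)"
proof (rule ex_bin)
  show "computes (Comp AddP (Pairf (Comp Snd (Comp Snd IdP)) (Comp Fst IdP))) (\<lambda>w. ps (ps w) + pf w)"
    by (intro c_add c_snd c_fst c_id)
  show "recfn (\<lambda>x. 0) (\<lambda>w. ps (ps w) + pf w) a n = a * n" for a n by (induction n) auto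
qed (rule c_const)
definition "MulP = (SOME P. computes P (\<lambda>v. pf v * ps v))"
lemma c_Mul: "computes MulP (\<lambda>v. pf v * ps v)" unfolding MulP_def by (rule someP[OF ex_mul])
lemma c_mul: "computes P f \<Longrightarrow> computes Q g \<Longrightarrow> computes (Comp MulP (Pairf P Q)) (\<lambda>z. f z * g z)"
  using c_comp[OF c_Mul c_pair] by simp

lemma ex_isz: "\<exists>P. computes P (\<lambda>n. bv (n = 0))"
proof -
  have "computes (Comp (Rec (constp 1) (constp 0)) (Pairf (constp 0) IdP))
     (\<lambda>z. recfn (\<lambda>_. 1) (\<lambda>_. 0) 0 z)"
    by (intro c_recz c_const c_id)
  moreover have "recfn (\<lambda>_. 1) (\<lambda>_. 0) 0 z = bv (z = 0)" for z by (cases z) auto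
  ultimately show ?thesis by (auto intro: computes_cong)
qed
definition "IszP = (SOME P. computes P (\<lambda>n. bv (n = 0)))"
lemma c_Isz: "computes IszP (\<lambda>n. bv (n = 0))" unfolding IszP_def by (rule someP[OF ex_isz])
lemma c_isz: "computes Q g \<Longrightarrow> computes (Comp IszP Q) (\<lambda>z. bv (g z = 0))"
  using c_comp[OF c_Isz] by simp

lemma c_eq: "computes P f \<Longrightarrow> computes Q g \<Longrightarrow>
  computes (Comp IszP (Comp AddP (Pairf (Comp SubP (Pairf P Q)) (Comp SubP (Pairf Q P))))) (\<lambda>z. bv (f z = g z))"
  by (rule computes_cong[OF c_isz[OF c_add[OF c_sub c_sub]]]) (auto simp: bv_def)

lemma c_lt: "computes P f \<Longrightarrow> computes Q g \<Longrightarrow>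
  computes (Comp IszP (Comp IszP (Comp SubP (Pairf Q P)))) (\<lambda>z. bv (f z < g z))"
  by (rule computes_cong[OF c_isz[OF c_isz[OF c_sub]]]) (auto simp: bv_def)

lemma c_le: "computes P f \<Longrightarrow> computes Q g \<Longrightarrow>
  computes (Comp IszP (Comp SubP (Pairf P Q))) (\<lambda>z. bv (f z \<le> g z))"
  by (rule computes_cong[OF c_isz[OF c_sub]]) (auto simp: bv_def)

lemma c_not: "computes P (\<lambda>z. bv (a z)) \<Longrightarrow> computes (Comp IszP P) (\<lambda>z. bv (\<not> a z))"
  by (rule computes_cong[OF c_isz]) (auto simp: bv_def split: if_splits)

lemma c_and: "computes P (\<lambda>z. bv (a z)) \<Longrightarrow> computes Q (\<lambda>z. bv (b z)) \<Longrightarrow>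
   computes (Comp MulP (Pairf P Q)) (\<lambda>z. bv (a z \<and> b z))"
  by (rule computes_cong[OF c_mul]) (auto simp: bv_def)

lemma c_or: "computes P (\<lambda>z. bv (a z)) \<Longrightarrow> computes Q (\<lambda>z. bv (b z)) \<Longrightarrow>
   computes (Comp IszP (Comp IszP (Comp AddP (Pairf P Q)))) (\<lambda>z. bv (a z \<or> b z))"
  by (rule computes_cong[OF c_isz[OF c_isz[OF c_add]]]) (auto simp: bv_def split: if_splits)

definition "IteP = Rec Snd (Comp Fst Fst)"
lemma c_Ite: "computes IteP (\<lambda>v. if ps v = 0 then ps (pf v) else pf (pf v))"
  unfolding IteP_def
  by (rule computes_cong[OF c_rec[OF c_Snd c_comp[OF c_Fst c_Fst]]]) (case_tac "ps x"; simp)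

lemma c_ite: "computes B (\<lambda>z. bv (b z)) \<Longrightarrow> computes P f \<Longrightarrow> computes Q g \<Longrightarrow>
  computes (Comp IteP (Pairf (Pairf P Q) B)) (\<lambda>z. if b z then f z else g z)"
  by (rule computes_cong[OF c_comp[OF c_Ite c_pair[OF c_pair]]]) (auto simp: bv_def)

definition iterf :: "(nat \<Rightarrow> nat) \<Rightarrow> nat \<Rightarrow> nat" where "iterf h v = (h ^^ ps v) (pf v)"

lemma c_Iter: assumes "computes H h"
  shows "computes (Rec IdP (Comp H (Comp Snd (Comp Snd IdP)))) (iterf h)"
proof -
  have *: "recfn (\<lambda>x. x) (\<lambda>w. h (ps (ps w))) a n = (h ^^ n) a" for a n by (induction n) simp_all
  show ?thesis unfolding iterf_def
    by (rule computes_cong[OF c_rec[OF c_id c_comp[OF assms c_snd[OF c_snd[OF c_id]]]]]) (simp only: *)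
qed

lemma c_iter: "computes H h \<Longrightarrow> computes Q g \<Longrightarrow>
  computes (Comp (Rec IdP (Comp H (Comp Snd (Comp Snd IdP)))) Q) (\<lambda>z. iterf h (g z))"
  by (rule c_comp[OF c_Iter])



definition ballf :: "(nat \<Rightarrow> bool) \<Rightarrow> nat \<Rightarrow> bool" where
  "ballf p v = (\<forall>j<ps v. p (pe (pf v) j))"

definition "BallP P = Rec (constp 1) (Comp MulP (Pairf (Comp Snd (Comp Snd IdP)) (Comp P (Pairf (Comp Fst IdP) (Comp Fst (Comp Snd IdP))))))"

lemma c_Ball: assumes "computes P (\<lambda>u. bv (p u))"
  shows "computes (BallP P) (\<lambda>v. bv (ballf p v))"
proof -
  have "computes (BallP P)
     (\<lambda>v. recfn (\<lambda>_. 1) (\<lambda>w. ps (ps w) * bv (p (pe (pf w) (pf (ps w))))) (pf v) (ps v))"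
    unfolding BallP_def by (intro c_rec c_const c_mul c_snd c_id c_comp[OF assms] c_pair c_fst)
  moreover have "recfn (\<lambda>_. 1) (\<lambda>w. ps (ps w) * bv (p (pe (pf w) (pf (ps w))))) a n = bv (\<forall>j<n. p (pe a j))" for a n
    by (induction n) (auto simp: bv_def less_Suc_eq)
  ultimately show ?thesis unfolding ballf_def by (auto intro: computes_cong)
qed

lemma c_ball: "computes P (\<lambda>u. bv (p u)) \<Longrightarrow> computes Q g \<Longrightarrow>
   computes (Comp (BallP P) Q) (\<lambda>z. bv (ballf p (g z)))"
  by (rule c_comp[OF c_Ball])

primrec firstn :: "(nat \<Rightarrow> nat) \<Rightarrow> nat \<Rightarrow> nat \<Rightarrow> nat" where
  "firstn q x 0 = 0"
| "firstn q x (Suc n) = (if firstn q x n \<noteq> 0 then firstn q x n else q (pe x n))"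

definition firstf :: "(nat \<Rightarrow> nat) \<Rightarrow> nat \<Rightarrow> nat" where "firstf q v = firstn q (pf v) (ps v)"

definition "FirstP Q = Rec (constp 0) (Comp IteP (Pairf (Pairf (Comp Snd (Comp Snd IdP)) (Comp Q (Pairf (Comp Fst IdP) (Comp Fst (Comp Snd IdP))))) (Comp IszP (Comp IszP (Comp Snd (Comp Snd IdP))))))"

lemma c_First: assumes "computes Q q"
  shows "computes (FirstP Q) (firstf q)"
proof -
  have "computes (FirstP Q)
     (\<lambda>v. recfn (\<lambda>_. 0) (\<lambda>w. if \<not> ps (ps w) = 0 then ps (ps w) else q (pe (pf w) (pf (ps w)))) (pf v) (ps v))"
    unfolding FirstP_def 
    apply (rule c_rec)
     apply (rule c_const)
    apply (rule c_ite)
      apply (rule c_not)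
      apply (rule c_isz)
      apply (rule c_snd c_id)+
    apply (rule c_comp[OF assms])
    apply (rule c_pair)
     apply (rule c_fst c_snd c_id)+
    done
  moreover have "recfn (\<lambda>_. 0) (\<lambda>w. if \<not> ps (ps w) = 0 then ps (ps w) else q (pe (pf w) (pf (ps w)))) a n = firstn q a n" for a n
    by (induction n) simp_all
  ultimately show ?thesis unfolding firstf_def by (auto intro: computes_cong)
qed

lemma c_first: "computes P q \<Longrightarrow> computes Q g \<Longrightarrow>
   computes (Comp (FirstP P) Q) (\<lambda>z. firstf q (g z))"
  by (rule c_comp[OF c_First])

primrec countn :: "(nat \<Rightarrow> bool) \<Rightarrow> nat \<Rightarrow> nat \<Rightarrow> nat" where
  "countn p x 0 = 0"
| "countn p x (Suc n) = countn p x n + bv (p (pe x n))"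

definition countf :: "(nat \<Rightarrow> bool) \<Rightarrow> nat \<Rightarrow> nat" where "countf p v = countn p (pf v) (ps v)"

definition "CountP P = Rec (constp 0) (Comp AddP (Pairf (Comp Snd (Comp Snd IdP)) (Comp P (Pairf (Comp Fst IdP) (Comp Fst (Comp Snd IdP))))))"

lemma c_Count: assumes "computes P (\<lambda>u. bv (p u))"
  shows "computes (CountP P) (countf p)"
proof -
  have "computes (CountP P)
     (\<lambda>v. recfn (\<lambda>_. 0) (\<lambda>w. ps (ps w) + bv (p (pe (pf w) (pf (ps w))))) (pf v) (ps v))"
    unfolding CountP_def by (intro c_rec c_const c_add c_snd c_id c_comp[OF assms] c_pair c_fst)
  moreover have "recfn (\<lambda>_. 0) (\<lambda>w. ps (ps w) + bv (p (pe (pf w) (pf (ps w))))) a n = countn p a n" for a n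
    by (induction n) auto
  ultimately show ?thesis unfolding countf_def by (auto intro: computes_cong)
qed

lemma c_count: "computes P (\<lambda>u. bv (p u)) \<Longrightarrow> computes Q g \<Longrightarrow>
   computes (Comp (CountP P) Q) (\<lambda>z. countf p (g z))"
  by (rule c_comp[OF c_Count])

lemma countn_card: "countn p x n = card {j. j < n \<and> p (pe x j)}"
proof (induction n)
  case (Suc n)
  have "{j. j < Suc n \<and> p (pe x j)} = {j. j < n \<and> p (pe x j)} \<union> (if p (pe x n) then {n} else {})"
    by (auto simp: less_Suc_eq)
  then show ?case using Suc by (auto simp: bv_def card_insert_if)
qed simp



lemma dm_step1: "z mod 2 = 1 \<Longrightarrow> Suc z div 2 = Suc (z div 2) \<and> Suc z mod 2 = (0::nat)" by presburger
lemma dm_step0: "z mod 2 \<noteq> 1 \<Longrightarrow> Suc z div 2 = z div 2 \<and> Suc z mod 2 = (1::nat)" by presburger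

lemma ex_dm: "\<exists>P. computes P (\<lambda>n. pe (n div 2) (n mod 2))"
proof -
  have "\<exists>P. computes P (\<lambda>z. recfn (\<lambda>_. pe 0 0) (\<lambda>w. if ps (ps (ps w)) = 1 then pe (Suc (pf (ps (ps w)))) 0 else pe (pf (ps (ps w))) 1) 0 z)"
    apply (rule exI)
    apply (rule c_recz)
    apply (rule c_const)
    apply (rule c_ite)
    apply (rule c_eq)
    apply (rule c_snd c_id c_const)+
    apply (rule c_pair)
    apply (rule c_suc c_fst c_snd c_id c_const)+
    apply (rule c_pair)
    apply (rule c_suc c_fst c_snd c_id c_const)+
    done
  moreover have "recfn (\<lambda>_. pe 0 0) (\<lambda>w. if ps (ps (ps w)) = 1 then pe (Suc (pf (ps (ps w)))) 0 else pe (pf (ps (ps w))) 1) 0 z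
     = pe (z div 2) (z mod 2)" for z
  proof (induction z)
    case (Suc z)
    then show ?case using dm_step1[of z] dm_step0[of z] by (simp del: mod_Suc div_Suc)
  qed simp
  ultimately show ?thesis by (auto intro: ex_cong)
qed
definition "DmP = (SOME P. computes P (\<lambda>n. pe (n div 2) (n mod 2)))"
lemma c_Dm: "computes DmP (\<lambda>n. pe (n div 2) (n mod 2))" unfolding DmP_def by (rule someP[OF ex_dm])

definition bitf :: "nat \<Rightarrow> nat \<Rightarrow> nat" where "bitf i x = (i div 2 ^ x) mod 2"

lemma iter_div2: "((\<lambda>n::nat. n div 2) ^^ x) i = i div 2 ^ x"
  by (induction x arbitrary: i) (simp_all add: div_mult2_eq[symmetric] mult.commute)

lemma c_bit: "computes P f \<Longrightarrow> computes Q g \<Longrightarrow> \<exists>R. computes R (\<lambda>z. bitf (f z) (g z))"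
proof -
  assume a: "computes P f" "computes Q g"
  have "computes (Comp Snd (Comp DmP (Comp (Rec IdP (Comp (Comp Fst DmP) (Comp Snd (Comp Snd IdP)))) (Pairf P Q))))
      (\<lambda>z. ps (pe (iterf (\<lambda>n. pf (pe (n div 2) (n mod 2))) (pe (f z) (g z)) div 2) (iterf (\<lambda>n. pf (pe (n div 2) (n mod 2))) (pe (f z) (g z)) mod 2)))"
    by (rule c_snd c_comp[OF c_Dm] c_iter c_comp[OF c_Fst c_Dm] c_pair a)+
  moreover have "ps (pe (iterf (\<lambda>n. pf (pe (n div 2) (n mod 2))) (pe (f z) (g z)) div 2) (iterf (\<lambda>n. pf (pe (n div 2) (n mod 2))) (pe (f z) (g z)) mod 2))
     = bitf (f z) (g z)" for z
    unfolding bitf_def iterf_def by (simp add: iter_div2)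
  ultimately show ?thesis by (blast intro: computes_cong)
qed

lemma ex_pow2: "\<exists>P. computes P (\<lambda>n. 2 ^ n)"
proof -
  have "computes (Comp (Rec (constp 1) (Comp AddP (Pairf (Comp Snd (Comp Snd IdP)) (Comp Snd (Comp Snd IdP))))) (Pairf (constp 0) IdP)) 
       (\<lambda>z. recfn (\<lambda>_. 1) (\<lambda>w. ps (ps w) + ps (ps w)) 0 z)"
    by (rule c_recz c_const c_add c_snd c_id)+
  moreover have "recfn (\<lambda>_. 1) (\<lambda>w. ps (ps w) + ps (ps w)) 0 z = 2 ^ z" for z
    by (induction z) auto
  ultimately show ?thesis by (auto intro: computes_cong)
qed
definition "Pow2P = (SOME P. computes P (\<lambda>n. 2 ^ n))"
lemma c_Pow2: "computes Pow2P (\<lambda>n. 2 ^ n)" unfolding Pow2P_def by (rule someP[OF ex_pow2])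
lemma c_pow2: "computes Q g \<Longrightarrow> computes (Comp Pow2P Q) (\<lambda>z. 2 ^ g z)"
  by (rule c_comp[OF c_Pow2])

definition "BitP = (SOME R. computes R (\<lambda>v. bitf (pf v) (ps v)))"
lemma c_Bit: "computes BitP (\<lambda>v. bitf (pf v) (ps v))"
  unfolding BitP_def by (rule someP[OF c_bit[OF c_Fst c_Snd]])
lemma c_bitf: "computes P f \<Longrightarrow> computes Q g \<Longrightarrow> computes (Comp BitP (Pairf P Q)) (\<lambda>z. bitf (f z) (g z))"
  using c_comp[OF c_Bit c_pair] by simp


section \<open>Certificates of computations\<close>

definition mkn :: "nat \<Rightarrow> nat \<Rightarrow> nat \<Rightarrow> nat \<Rightarrow> nat \<Rightarrow> nat \<Rightarrow> nat" where
  "mkn k c x y d1 d2 = pe k (pe c (pe x (pe y (pe d1 d2))))"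
definition "nk n = pf n"
definition "nc n = pf (ps n)"
definition "nx n = pf (ps (ps n))"
definition "ny n = pf (ps (ps (ps n)))"
definition "nd1 n = pf (ps (ps (ps (ps n))))"
definition "nd2 n = ps (ps (ps (ps (ps n))))"

lemma mkn_simps[simp]: "nk (mkn k c x y d1 d2) = k" "nc (mkn k c x y d1 d2) = c" "nx (mkn k c x y d1 d2) = x"
  "ny (mkn k c x y d1 d2) = y" "nd1 (mkn k c x y d1 d2) = d1" "nd2 (mkn k c x y d1 d2) = d2"
  by (simp_all add: mkn_def nk_def nc_def nx_def ny_def nd1_def nd2_def)

definition okc :: "nat \<Rightarrow> nat \<Rightarrow> nat \<Rightarrow> bool" where "okc len j d \<longleftrightarrow> 0 < d \<and> j + d < len"

definition locchk :: "nat \<Rightarrow> nat \<Rightarrow> nat \<Rightarrow> nat \<Rightarrow> nat \<Rightarrow> nat \<Rightarrow> nat \<Rightarrow> bool" where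
  "locchk L i len j nd c1 c2 \<longleftrightarrow>
   (nk nd = 0 \<and> (
     (nc nd = pe 0 0 \<and> ny nd = 0) \<or>
     (nc nd = pe 1 0 \<and> ny nd = Suc (nx nd)) \<or>
     (nc nd = pe 2 0 \<and> ny nd = pf (nx nd)) \<or>
     (nc nd = pe 3 0 \<and> ny nd = ps (nx nd)) \<or>
     (nc nd = pe 4 0 \<and> nx nd < L \<and> ny nd = bitf i (nx nd)) \<or>
     (pf (nc nd) = 5 \<and> okc len j (nd1 nd) \<and> okc len j (nd2 nd) \<and>
        nk c1 = 0 \<and> nc c1 = pf (ps (nc nd)) \<and> nx c1 = nx nd \<and>
        nk c2 = 0 \<and> nc c2 = ps (ps (nc nd)) \<and> nx c2 = nx nd \<and> ny nd = pe (ny c1) (ny c2)) \<or>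
     (pf (nc nd) = 6 \<and> okc len j (nd1 nd) \<and> okc len j (nd2 nd) \<and>
        nk c1 = 0 \<and> nc c1 = ps (ps (nc nd)) \<and> nx c1 = nx nd \<and>
        nk c2 = 0 \<and> nc c2 = pf (ps (nc nd)) \<and> nx c2 = ny c1 \<and> ny c2 = ny nd) \<or>
     (pf (nc nd) = 7 \<and> okc len j (nd1 nd) \<and> ps (nx nd) = 0 \<and>
        nk c1 = 0 \<and> nc c1 = pf (ps (nc nd)) \<and> nx c1 = pf (nx nd) \<and> ny c1 = ny nd) \<or>
     (pf (nc nd) = 7 \<and> okc len j (nd1 nd) \<and> okc len j (nd2 nd) \<and> \<not> ps (nx nd) = 0 \<and>
        nk c1 = 0 \<and> nc c1 = nc nd \<and> nx c1 = pe (pf (nx nd)) (ps (nx nd) - 1) \<and>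
        nk c2 = 0 \<and> nc c2 = ps (ps (nc nd)) \<and> nx c2 = pe (pf (nx nd)) (pe (ps (nx nd) - 1) (ny c1)) \<and>
        ny c2 = ny nd) \<or>
     (pf (nc nd) = 8 \<and> okc len j (nd1 nd) \<and> okc len j (nd2 nd) \<and>
        nk c1 = 1 \<and> nc c1 = ps (nc nd) \<and> nx c1 = nx nd \<and> ny c1 = ny nd \<and>
        nk c2 = 0 \<and> nc c2 = ps (nc nd) \<and> nx c2 = pe (nx nd) (ny nd) \<and> ny c2 = 0))) \<or>
   (nk nd = 1 \<and> (ny nd = 0 \<or>
     (okc len j (nd1 nd) \<and> okc len j (nd2 nd) \<and>
        nk c1 = 1 \<and> nc c1 = nc nd \<and> nx c1 = nx nd \<and> ny c1 = ny nd - 1 \<and>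
        nk c2 = 0 \<and> nc c2 = nc nd \<and> nx c2 = pe (nx nd) (ny nd - 1) \<and> \<not> ny c2 = 0)))"

definition consist :: "(nat \<Rightarrow> bool) \<Rightarrow> nat \<Rightarrow> nat \<Rightarrow> bool" where
  "consist A L i \<longleftrightarrow> (\<forall>q<L. bitf i q = bv (A q))"

definition soundn :: "(nat \<Rightarrow> bool) \<Rightarrow> nat \<Rightarrow> bool" where
  "soundn A nd \<longleftrightarrow>
     (nk nd = 0 \<longrightarrow> (\<forall>p. enc p = nc nd \<longrightarrow> eval A p (nx nd) (ny nd))) \<and>
     (nk nd = 1 \<longrightarrow> (\<forall>p. enc p = nc nd \<longrightarrow> (\<forall>m<ny nd. \<exists>v. v \<noteq> 0 \<and> eval A p (pe (nx nd) m) v)))"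

lemma loc_sound:
  assumes lc: "locchk L i len j nd c1 c2" and co: "consist A L i"
    and s1: "okc len j (nd1 nd) \<Longrightarrow> soundn A c1"
    and s2: "okc len j (nd2 nd) \<Longrightarrow> soundn A c2"
  shows "soundn A nd"
  unfolding soundn_def
proof (intro conjI allI impI)
  fix p assume k: "nk nd = 0" and e: "enc p = nc nd"
  have e': "nc nd = enc p" using e by simp
  show "eval A p (nx nd) (ny nd)"
  proof (cases p)
    case Zf
    with e have "nc nd = pe 0 0" by simp
    with lc k Zf show ?thesis by (auto simp: locchk_def intro: eval.intros)
  next
    case Sf
    with e have "nc nd = pe 1 0" by simp
    with lc k Sf show ?thesis by (auto simp: locchk_def intro: eval.intros)
  next
    case Fst
    with e have "nc nd = pe 2 0" by simp
    with lc k Fst show ?thesis by (auto simp: locchk_def pf_def intro: eval.intros)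
  next
    case Snd
    with e have "nc nd = pe 3 0" by simp
    with lc k Snd show ?thesis by (auto simp: locchk_def ps_def intro: eval.intros)
  next
    case Orc
    with e have "nc nd = pe 4 0" by simp
    with lc k have "nx nd < L" "ny nd = bitf i (nx nd)" by (auto simp: locchk_def)
    with co have "ny nd = (if A (nx nd) then 1 else 0)" by (auto simp: consist_def bv_def)
    with Orc show ?thesis using eval.orc[of A "nx nd"] by simp
  next
    case (Pairf f g)
    with lc k e' have d: "okc len j (nd1 nd) \<and> okc len j (nd2 nd) \<and>
        nk c1 = 0 \<and> nc c1 = enc f \<and> nx c1 = nx nd \<and>
        nk c2 = 0 \<and> nc c2 = enc g \<and> nx c2 = nx nd \<and> ny nd = pe (ny c1) (ny c2)"
      by (simp add: locchk_def)
    then have "soundn A c1" "soundn A c2" using s1 s2 by auto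
    then have "eval A f (nx nd) (ny c1)" "eval A g (nx nd) (ny c2)" using d by (auto simp: soundn_def)
    then show ?thesis using d Pairf by (auto intro: eval.pair)
  next
    case (Comp f g)
    with lc k e' have d: "okc len j (nd1 nd) \<and> okc len j (nd2 nd) \<and>
        nk c1 = 0 \<and> nc c1 = enc g \<and> nx c1 = nx nd \<and>
        nk c2 = 0 \<and> nc c2 = enc f \<and> nx c2 = ny c1 \<and> ny c2 = ny nd"
      by (simp add: locchk_def)
    then have "soundn A c1" "soundn A c2" using s1 s2 by auto
    then have "eval A g (nx nd) (ny c1)" "eval A f (ny c1) (ny nd)" using d by (auto simp: soundn_def)
    then show ?thesis using d Comp by (auto intro: eval.comp)
  next
    case (Rec f g)
    with lc k e' have d: "(okc len j (nd1 nd) \<and> ps (nx nd) = 0 \<and>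
        nk c1 = 0 \<and> nc c1 = enc f \<and> nx c1 = pf (nx nd) \<and> ny c1 = ny nd) \<or>
     (okc len j (nd1 nd) \<and> okc len j (nd2 nd) \<and> \<not> ps (nx nd) = 0 \<and>
        nk c1 = 0 \<and> nc c1 = nc nd \<and> nx c1 = pe (pf (nx nd)) (ps (nx nd) - 1) \<and>
        nk c2 = 0 \<and> nc c2 = enc g \<and> nx c2 = pe (pf (nx nd)) (pe (ps (nx nd) - 1) (ny c1)) \<and>
        ny c2 = ny nd)"
      by (simp add: locchk_def)
    then show ?thesis
    proof
      assume d: "okc len j (nd1 nd) \<and> ps (nx nd) = 0 \<and>
        nk c1 = 0 \<and> nc c1 = enc f \<and> nx c1 = pf (nx nd) \<and> ny c1 = ny nd"
      then have "soundn A c1" using s1 by auto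
      then have "eval A f (pf (nx nd)) (ny nd)" using d by (auto simp: soundn_def)
      then have "eval A (Rec f g) (pe (pf (nx nd)) 0) (ny nd)" by (rule eval.rec0)
      then show ?thesis using d Rec by (metis pe_pf_ps)
    next
      assume d: "okc len j (nd1 nd) \<and> okc len j (nd2 nd) \<and> \<not> ps (nx nd) = 0 \<and>
        nk c1 = 0 \<and> nc c1 = nc nd \<and> nx c1 = pe (pf (nx nd)) (ps (nx nd) - 1) \<and>
        nk c2 = 0 \<and> nc c2 = enc g \<and> nx c2 = pe (pf (nx nd)) (pe (ps (nx nd) - 1) (ny c1)) \<and>
        ny c2 = ny nd"
      then have "soundn A c1" "soundn A c2" using s1 s2 by auto
      then have "eval A (Rec f g) (pe (pf (nx nd)) (ps (nx nd) - 1)) (ny c1)"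
         "eval A g (pe (pf (nx nd)) (pe (ps (nx nd) - 1) (ny c1))) (ny nd)"
        using d e Rec by (auto simp: soundn_def)
      then have "eval A (Rec f g) (pe (pf (nx nd)) (Suc (ps (nx nd) - 1))) (ny nd)" by (rule eval.recS)
      moreover have "Suc (ps (nx nd) - 1) = ps (nx nd)" using d by simp
      ultimately show ?thesis using Rec by (metis pe_pf_ps)
    qed
  next
    case (Mu f)
    with lc k e' have d: "okc len j (nd1 nd) \<and> okc len j (nd2 nd) \<and>
        nk c1 = 1 \<and> nc c1 = enc f \<and> nx c1 = nx nd \<and> ny c1 = ny nd \<and>
        nk c2 = 0 \<and> nc c2 = enc f \<and> nx c2 = pe (nx nd) (ny nd) \<and> ny c2 = 0"
      by (simp add: locchk_def)
    then have "soundn A c1" "soundn A c2" using s1 s2 by auto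
    then have "\<forall>m<ny nd. \<exists>v. v \<noteq> 0 \<and> eval A f (pe (nx nd) m) v" "eval A f (pe (nx nd) (ny nd)) 0"
      using d by (auto simp: soundn_def)
    then show ?thesis using Mu by (auto intro: eval.mu)
  qed
next
  fix p m assume k: "nk nd = 1" and e: "enc p = nc nd" and m: "m < ny nd"
  then have d: "okc len j (nd1 nd) \<and> okc len j (nd2 nd) \<and>
        nk c1 = 1 \<and> nc c1 = nc nd \<and> nx c1 = nx nd \<and> ny c1 = ny nd - 1 \<and>
        nk c2 = 0 \<and> nc c2 = nc nd \<and> nx c2 = pe (nx nd) (ny nd - 1) \<and> \<not> ny c2 = 0"
    using lc by (auto simp: locchk_def)
  then have "soundn A c1" "soundn A c2" using s1 s2 by auto
  then have a: "\<forall>m<ny nd - 1. \<exists>v. v \<noteq> 0 \<and> eval A p (pe (nx nd) m) v"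
    and b: "eval A p (pe (nx nd) (ny nd - 1)) (ny c2)"
    using d e by (auto simp: soundn_def)
  show "\<exists>v. v \<noteq> 0 \<and> eval A p (pe (nx nd) m) v"
  proof (cases "m < ny nd - 1")
    case True then show ?thesis using a by auto
  next
    case False then have "m = ny nd - 1" using m by auto
    then show ?thesis using b d by auto
  qed
qed

definition validf :: "nat \<Rightarrow> nat \<Rightarrow> nat \<Rightarrow> (nat \<Rightarrow> nat) \<Rightarrow> bool" where
  "validf L i len nt \<longleftrightarrow> (\<forall>j<len. locchk L i len j (nt j) (nt (j + nd1 (nt j))) (nt (j + nd2 (nt j))))"

lemma valid_sound:
  assumes "validf L i len nt" "consist A L i" "j < len"
  shows "soundn A (nt j)"
  using assms(3)
proof (induction "len - j" arbitrary: j rule: less_induct)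
  case less
  show ?case
  proof (rule loc_sound)
    show "locchk L i len j (nt j) (nt (j + nd1 (nt j))) (nt (j + nd2 (nt j)))"
      using assms(1) less.prems by (auto simp: validf_def)
    show "consist A L i" by (rule assms(2))
    show "soundn A (nt (j + nd1 (nt j)))" if "okc len j (nd1 (nt j))"
      using that less.hyps[of "j + nd1 (nt j)"] by (auto simp: okc_def)
    show "soundn A (nt (j + nd2 (nt j)))" if "okc len j (nd2 (nt j))"
      using that less.hyps[of "j + nd2 (nt j)"] by (auto simp: okc_def)
  qed
qed


lemma loc_mono:
  assumes "locchk L i len1 j nd c1 c2"
    "okc len1 j (nd1 nd) \<Longrightarrow> c1' = c1 \<and> okc len2 j' (nd1 nd)"
    "okc len1 j (nd2 nd) \<Longrightarrow> c2' = c2 \<and> okc len2 j' (nd2 nd)"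
  shows "locchk L i len2 j' nd c1' c2'"
  using assms(1) unfolding locchk_def
  apply (elim disjE conjE)
  using assms(2,3) by simp_all

lemma validf_cong: "validf L i len nt1 \<Longrightarrow> (\<And>k. k < len \<Longrightarrow> nt1 k = nt2 k) \<Longrightarrow> validf L i len nt2"
  unfolding validf_def
proof (intro allI impI)
  fix j assume v: "\<forall>j<len. locchk L i len j (nt1 j) (nt1 (j + nd1 (nt1 j))) (nt1 (j + nd2 (nt1 j)))"
    and e: "\<And>k. k < len \<Longrightarrow> nt1 k = nt2 k" and j: "j < len"
  have "locchk L i len j (nt1 j) (nt1 (j + nd1 (nt1 j))) (nt1 (j + nd2 (nt1 j)))" using v j by auto
  then have "locchk L i len j (nt2 j) (nt1 (j + nd1 (nt2 j))) (nt1 (j + nd2 (nt2 j)))" using e j by simp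
  then show "locchk L i len j (nt2 j) (nt2 (j + nd1 (nt2 j))) (nt2 (j + nd2 (nt2 j)))"
    by (rule loc_mono) (auto simp: okc_def e)
qed

lemma comb:
  assumes v1: "validf L i (length ns1) (nth ns1)" and v2: "validf L i (length ns2) (nth ns2)"
    and h: "locchk L i (Suc (length ns1 + length ns2)) 0 h ((h # ns1 @ ns2) ! nd1 h) ((h # ns1 @ ns2) ! nd2 h)"
  shows "validf L i (length (h # ns1 @ ns2)) (nth (h # ns1 @ ns2))"
  unfolding validf_def
proof (intro allI impI)
  fix j assume j: "j < length (h # ns1 @ ns2)"
  let ?ns = "h # ns1 @ ns2"
  show "locchk L i (length ?ns) j (?ns ! j) (?ns ! (j + nd1 (?ns ! j))) (?ns ! (j + nd2 (?ns ! j)))"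
  proof (cases j)
    case 0 then show ?thesis using h by simp
  next
    case (Suc j')
    show ?thesis
    proof (cases "j' < length ns1")
      case True
      then have l: "locchk L i (length ns1) j' (ns1 ! j') (ns1 ! (j' + nd1 (ns1 ! j'))) (ns1 ! (j' + nd2 (ns1 ! j')))"
        using v1 by (auto simp: validf_def)
      have e: "?ns ! j = ns1 ! j'" using True Suc by (simp add: nth_append)
      show ?thesis unfolding e
        by (rule loc_mono[OF l]) (auto simp: okc_def Suc nth_append)
    next
      case False
      define j'' where "j'' = j' - length ns1"
      have jj: "j' = length ns1 + j''" "j'' < length ns2" using False j Suc by (auto simp: j''_def)
      then have l: "locchk L i (length ns2) j'' (ns2 ! j'') (ns2 ! (j'' + nd1 (ns2 ! j''))) (ns2 ! (j'' + nd2 (ns2 ! j'')))"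
        using v2 by (auto simp: validf_def)
      have e: "?ns ! j = ns2 ! j''" using jj Suc by (simp add: nth_append)
      show ?thesis unfolding e
        by (rule loc_mono[OF l]) (auto simp: okc_def Suc jj nth_append)
    qed
  qed
qed

definition certk :: "nat \<Rightarrow> (nat \<Rightarrow> bool) \<Rightarrow> nat \<Rightarrow> nat \<Rightarrow> nat \<Rightarrow> nat list \<Rightarrow> nat \<Rightarrow> bool" where
  "certk k A c x y ns M \<longleftrightarrow> ns \<noteq> [] \<and> nk (hd ns) = k \<and> nc (hd ns) = c \<and> nx (hd ns) = x \<and> ny (hd ns) = y \<and>
     (\<forall>L i. M \<le> L \<longrightarrow> consist A L i \<longrightarrow> validf L i (length ns) (nth ns))"

lemma mk0:
  assumes "\<And>L i. M \<le> L \<Longrightarrow> consist A L i \<Longrightarrow> locchk L i 1 0 (mkn k c x y 0 0) (mkn k c x y 0 0) (mkn k c x y 0 0)"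
  shows "certk k A c x y [mkn k c x y 0 0] M"
  using assms unfolding certk_def validf_def by auto

lemma mk2:
  assumes c1: "certk k1 A c1 x1 y1 ns1 M1" and c2: "certk k2 A c2 x2 y2 ns2 M2"
    and h: "\<And>L i len. okc len 0 1 \<Longrightarrow> okc len 0 (Suc (length ns1)) \<Longrightarrow>
      locchk L i len 0 (mkn k c x y 1 (Suc (length ns1))) (mkn k1 c1 x1 y1 (nd1 (hd ns1)) (nd2 (hd ns1)))
       (mkn k2 c2 x2 y2 (nd1 (hd ns2)) (nd2 (hd ns2)))"
  shows "certk k A c x y (mkn k c x y 1 (Suc (length ns1)) # ns1 @ ns2) (max M1 M2)"
proof -
  have n1: "ns1 \<noteq> []" "hd ns1 = mkn k1 c1 x1 y1 (nd1 (hd ns1)) (nd2 (hd ns1))"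
    using c1 by (auto simp: certk_def mkn_def nk_def nc_def nx_def ny_def nd1_def nd2_def)
  have n2: "ns2 \<noteq> []" "hd ns2 = mkn k2 c2 x2 y2 (nd1 (hd ns2)) (nd2 (hd ns2))"
    using c2 by (auto simp: certk_def mkn_def nk_def nc_def nx_def ny_def nd1_def nd2_def)
  let ?h = "mkn k c x y 1 (Suc (length ns1))"
  have a1: "(?h # ns1 @ ns2) ! 1 = hd ns1" using n1 by (cases ns1) auto
  have a2: "(?h # ns1 @ ns2) ! Suc (length ns1) = hd ns2" using n2 by (cases ns2) (auto simp: nth_append)
  show ?thesis unfolding certk_def
  proof (intro conjI allI impI)
    fix L i assume "max M1 M2 \<le> L" "consist A L i"
    then have "validf L i (length ns1) (nth ns1)" "validf L i (length ns2) (nth ns2)"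
      using c1 c2 by (auto simp: certk_def)
    moreover have "locchk L i (Suc (length ns1 + length ns2)) 0 ?h ((?h # ns1 @ ns2) ! nd1 ?h) ((?h # ns1 @ ns2) ! nd2 ?h)"
      using h[of "Suc (length ns1 + length ns2)" L i] n1 n2 a1 a2 by (auto simp: okc_def)
    ultimately show "validf L i (length (?h # ns1 @ ns2)) (nth (?h # ns1 @ ns2))" by (rule comb)
  qed simp_all
qed

lemma mk1:
  assumes c1: "certk k1 A c1 x1 y1 ns1 M1"
    and h: "\<And>L i len c2. okc len 0 1 \<Longrightarrow>
      locchk L i len 0 (mkn k c x y 1 0) (mkn k1 c1 x1 y1 (nd1 (hd ns1)) (nd2 (hd ns1))) c2"
  shows "certk k A c x y (mkn k c x y 1 0 # ns1) M1"
proof -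
  have n1: "ns1 \<noteq> []" "hd ns1 = mkn k1 c1 x1 y1 (nd1 (hd ns1)) (nd2 (hd ns1))"
    using c1 by (auto simp: certk_def mkn_def nk_def nc_def nx_def ny_def nd1_def nd2_def)
  let ?h = "mkn k c x y 1 0"
  have a1: "(?h # ns1 @ []) ! 1 = hd ns1" using n1 by (cases ns1) auto
  show ?thesis unfolding certk_def
  proof (intro conjI allI impI)
    fix L i assume "M1 \<le> L" "consist A L i"
    then have "validf L i (length ns1) (nth ns1)" "validf L i (length []) (nth [])"
      using c1 by (auto simp: certk_def validf_def)
    moreover have "locchk L i (Suc (length ns1 + length [])) 0 ?h ((?h # ns1 @ []) ! nd1 ?h) ((?h # ns1 @ []) ! nd2 ?h)"
      using h[of "Suc (length ns1)" L i] n1 a1 by (auto simp: okc_def)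
    ultimately have "validf L i (length (?h # ns1 @ [])) (nth (?h # ns1 @ []))" by (rule comb)
    then show "validf L i (length (?h # ns1)) (nth (?h # ns1))" by simp
  qed simp_all
qed

lemma cert_chain:
  "(\<forall>m<n. \<exists>v. v \<noteq> 0 \<and> (\<exists>ns M. certk 0 A c (pe x m) v ns M)) \<Longrightarrow> \<exists>ns M. certk 1 A c x n ns M"
proof (induction n)
  case 0
  have "certk 1 A c x 0 [mkn 1 c x 0 0 0] 0" by (rule mk0) (simp add: locchk_def)
  then show ?case by blast
next
  case (Suc n)
  then obtain ns1 M1 where c1: "certk 1 A c x n ns1 M1" by auto
  from Suc.prems obtain v ns2 M2 where v: "v \<noteq> 0" and c2: "certk 0 A c (pe x n) v ns2 M2" by blast
  have "certk 1 A c x (Suc n) (mkn 1 c x (Suc n) 1 (Suc (length ns1)) # ns1 @ ns2) (max M1 M2)"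
    by (rule mk2[OF c1 c2]) (use v in \<open>simp add: locchk_def\<close>)
  then show ?case by blast
qed

lemma cert_complete: "eval A p x y \<Longrightarrow> \<exists>ns M. certk 0 A (enc p) x y ns M"
proof (induction rule: eval.induct)
  case (zero A x)
  have "certk 0 A (enc Zf) x 0 [mkn 0 (enc Zf) x 0 0 0] 0" by (rule mk0) (simp add: locchk_def)
  then show ?case by blast
next
  case (succ A x)
  have "certk 0 A (enc Sf) x (Suc x) [mkn 0 (enc Sf) x (Suc x) 0 0] 0" by (rule mk0) (simp add: locchk_def)
  then show ?case by blast
next
  case (fst A x)
  have "certk 0 A (enc Fst) x (fst (prod_decode x)) [mkn 0 (enc Fst) x (fst (prod_decode x)) 0 0] 0"
    by (rule mk0) (simp add: locchk_def pf_def)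
  then show ?case by blast
next
  case (snd A x)
  have "certk 0 A (enc Snd) x (snd (prod_decode x)) [mkn 0 (enc Snd) x (snd (prod_decode x)) 0 0] 0"
    by (rule mk0) (simp add: locchk_def ps_def)
  then show ?case by blast
next
  case (orc A x)
  have "certk 0 A (enc Orc) x (if A x then 1 else 0) [mkn 0 (enc Orc) x (if A x then 1 else 0) 0 0] (Suc x)"
    by (rule mk0) (auto simp: locchk_def consist_def bv_def)
  then show ?case by blast
next
  case (pair A f x y g z)
  then obtain ns1 M1 ns2 M2 where c1: "certk 0 A (enc f) x y ns1 M1" and c2: "certk 0 A (enc g) x z ns2 M2" by blast
  have "certk 0 A (enc (Pairf f g)) x (pe y z) (mkn 0 (enc (Pairf f g)) x (pe y z) 1 (Suc (length ns1)) # ns1 @ ns2) (max M1 M2)"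
    by (rule mk2[OF c1 c2]) (simp add: locchk_def)
  then show ?case by blast
next
  case (comp A g x y f z)
  then obtain ns1 M1 ns2 M2 where c1: "certk 0 A (enc g) x y ns1 M1" and c2: "certk 0 A (enc f) y z ns2 M2" by blast
  have "certk 0 A (enc (Comp f g)) x z (mkn 0 (enc (Comp f g)) x z 1 (Suc (length ns1)) # ns1 @ ns2) (max M1 M2)"
    by (rule mk2[OF c1 c2]) (simp add: locchk_def)
  then show ?case by blast
next
  case (rec0 A f x y g)
  then obtain ns1 M1 where c1: "certk 0 A (enc f) x y ns1 M1" by blast
  have "certk 0 A (enc (Rec f g)) (pe x 0) y (mkn 0 (enc (Rec f g)) (pe x 0) y 1 0 # ns1) M1"
    by (rule mk1[OF c1]) (simp add: locchk_def)
  then show ?case by blast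
next
  case (recS A f g x n y z)
  then obtain ns1 M1 ns2 M2 where c1: "certk 0 A (enc (Rec f g)) (pe x n) y ns1 M1"
    and c2: "certk 0 A (enc g) (pe x (pe n y)) z ns2 M2" by blast
  have "certk 0 A (enc (Rec f g)) (pe x (Suc n)) z (mkn 0 (enc (Rec f g)) (pe x (Suc n)) z 1 (Suc (length ns1)) # ns1 @ ns2) (max M1 M2)"
    by (rule mk2[OF c1 c2]) (simp add: locchk_def)
  then show ?case by blast
next
  case (mu A f x n)
  then obtain ns2 M2 where c2: "certk 0 A (enc f) (pe x n) 0 ns2 M2" by blast
  from mu.IH(2) have "\<forall>m<n. \<exists>v. v \<noteq> 0 \<and> (\<exists>ns M. certk 0 A (enc f) (pe x m) v ns M)" by blast
  then obtain ns1 M1 where c1: "certk 1 A (enc f) x n ns1 M1" using cert_chain by blast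
  have "certk 0 A (enc (Mu f)) x n (mkn 0 (enc (Mu f)) x n 1 (Suc (length ns1)) # ns1 @ ns2) (max M1 M2)"
    by (rule mk2[OF c1 c2]) (simp add: locchk_def)
  then show ?case by blast
qed


definition nthb :: "nat \<Rightarrow> nat \<Rightarrow> nat" where "nthb b k = pf ((ps ^^ k) b)"

primrec encl :: "nat list \<Rightarrow> nat" where
  "encl [] = 0"
| "encl (h # t) = pe h (encl t)"

lemma nthb_encl: "k < length ns \<Longrightarrow> nthb (encl ns) k = ns ! k"
proof (induction ns arbitrary: k)
  case (Cons h t)
  then show ?case by (cases k) (auto simp: nthb_def funpow_swap1)
qed simp

definition validw :: "nat \<Rightarrow> nat \<Rightarrow> nat \<Rightarrow> bool" where
  "validw L i w \<longleftrightarrow> 0 < pf w \<and> validf L i (pf w) (nthb (ps w))"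

definition srchq :: "nat \<Rightarrow> nat" where
  "srchq u = (if validw (pf (ps (pf u))) (ps (ps (pf u))) (ps u) \<and> nk (nthb (ps (ps u)) 0) = 0 \<and>
      nc (nthb (ps (ps u)) 0) = pf (pf (pf u)) \<and> nx (nthb (ps (ps u)) 0) = ps (pf (pf u))
     then Suc (ny (nthb (ps (ps u)) 0)) else 0)"

definition srch :: "nat \<Rightarrow> nat \<Rightarrow> nat \<Rightarrow> nat \<Rightarrow> nat \<Rightarrow> nat" where
  "srch k c x L i = firstf srchq (pe (pe (pe c x) (pe L i)) (Suc k))"

lemma firstn_nz: "firstn q a n \<noteq> 0 \<Longrightarrow> \<exists>m<n. firstn q a n = q (pe a m)"
proof (induction n)
  case (Suc n)
  show ?case
  proof (cases "firstn q a n \<noteq> 0")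
    case True
    then obtain m where "m < n" "firstn q a n = q (pe a m)" using Suc.IH by blast
    then show ?thesis using True by (intro exI[of _ m]) simp
  next
    case False
    then show ?thesis by (intro exI[of _ n]) simp
  qed
qed simp

lemma firstn_ex: "q (pe a m) \<noteq> 0 \<Longrightarrow> m < n \<Longrightarrow> firstn q a n \<noteq> 0"
  by (induction n) (auto simp: less_Suc_eq)

lemma srch_sound:
  assumes "srch k c x L i = Suc y" "consist A L i" "enc p = c"
  shows "eval A p x y"
proof -
  obtain m where m: "m < Suc k" "srchq (pe (pe (pe c x) (pe L i)) m) = Suc y"
    using firstn_nz[of srchq "pe (pe c x) (pe L i)" "Suc k"] assms(1) by (auto simp: srch_def firstf_def)
  then have v: "validw L i m" and h: "nk (nthb (ps m) 0) = 0" "nc (nthb (ps m) 0) = c" "nx (nthb (ps m) 0) = x"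
    "ny (nthb (ps m) 0) = y"
    by (auto simp: srchq_def split: if_splits)
  then have "soundn A (nthb (ps m) 0)" using valid_sound[of L i "pf m" "nthb (ps m)" A 0] assms(2)
    by (auto simp: validw_def)
  then show ?thesis using h assms(3) by (auto simp: soundn_def)
qed

lemma srch_complete:
  assumes "eval A p x y"
  shows "\<exists>K. \<forall>k L i. K \<le> k \<longrightarrow> K \<le> L \<longrightarrow> consist A L i \<longrightarrow> srch k (enc p) x L i = Suc y"
proof -
  obtain ns M where c: "certk 0 A (enc p) x y ns M" using cert_complete[OF assms] by blast
  define w where "w = pe (length ns) (encl ns)"
  show ?thesis
  proof (intro exI allI impI)
    fix k L i assume k: "max w M \<le> k" and L: "max w M \<le> L" and co: "consist A L i"
    have ne: "ns \<noteq> []" using c by (simp add: certk_def)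
    have vf: "validf L i (length ns) (nth ns)" using c k L co by (auto simp: certk_def)
    have "validf L i (length ns) (nthb (encl ns))"
      by (rule validf_cong[OF vf]) (simp add: nthb_encl)
    then have vw: "validw L i w" using ne by (simp add: validw_def w_def)
    have hd: "nthb (encl ns) 0 = hd ns" using ne by (simp add: nthb_encl hd_conv_nth)
    have "srchq (pe (pe (pe (enc p) x) (pe L i)) w) = Suc y"
      using vw hd c by (simp add: srchq_def w_def certk_def)
    then have nz: "srch k (enc p) x L i \<noteq> 0"
      using firstn_ex[of srchq "pe (pe (enc p) x) (pe L i)" w "Suc k"] k
      by (auto simp: srch_def firstf_def)
    then obtain y' where y': "srch k (enc p) x L i = Suc y'" by (cases "srch k (enc p) x L i") auto
    then have "eval A p x y'" using srch_sound co by blast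
    with assms have "y' = y" using eval_det by blast
    with y' show "srch k (enc p) x L i = Suc y" by simp
  qed
qed

lemma srch_mono:
  assumes "srch k c x L i = Suc y" "consist A L i" "enc p = c"
  shows "\<exists>K. \<forall>k' L' i'. K \<le> k' \<longrightarrow> K \<le> L' \<longrightarrow> consist A L' i' \<longrightarrow> srch k' c x L' i' = Suc y"
  using srch_complete[OF srch_sound[OF assms]] assms(3) by simp


lemma c_nthb: "computes P f \<Longrightarrow> computes Q g \<Longrightarrow>
   computes (Comp Fst (Comp (Rec IdP (Comp Snd (Comp Snd (Comp Snd IdP)))) (Pairf P Q))) (\<lambda>z. nthb (f z) (g z))"
  by (rule computes_cong[OF c_fst[OF c_iter[OF c_Snd c_pair]]]) (simp_all add: nthb_def iterf_def)

lemma c_nk: "computes Q g \<Longrightarrow> computes (Comp Fst Q) (\<lambda>z. nk (g z))"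
  unfolding nk_def by (rule c_fst)
lemma c_nc: "computes Q g \<Longrightarrow> computes (Comp Fst (Comp Snd Q)) (\<lambda>z. nc (g z))"
  unfolding nc_def by (rule c_fst c_snd)+
lemma c_nx: "computes Q g \<Longrightarrow> computes (Comp Fst (Comp Snd (Comp Snd Q))) (\<lambda>z. nx (g z))"
  unfolding nx_def by (rule c_fst c_snd)+
lemma c_ny: "computes Q g \<Longrightarrow> computes (Comp Fst (Comp Snd (Comp Snd (Comp Snd Q)))) (\<lambda>z. ny (g z))"
  unfolding ny_def by (rule c_fst c_snd)+
lemma c_nd1: "computes Q g \<Longrightarrow> computes (Comp Fst (Comp Snd (Comp Snd (Comp Snd (Comp Snd Q))))) (\<lambda>z. nd1 (g z))"
  unfolding nd1_def by (rule c_fst c_snd)+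
lemma c_nd2: "computes Q g \<Longrightarrow> computes (Comp Snd (Comp Snd (Comp Snd (Comp Snd (Comp Snd Q))))) (\<lambda>z. nd2 (g z))"
  unfolding nd2_def by (rule c_fst c_snd)+

lemma c_okc: "computes P1 f1 \<Longrightarrow> computes P2 f2 \<Longrightarrow> computes P3 f3 \<Longrightarrow>
  computes (Comp MulP (Pairf (Comp IszP (Comp IszP (Comp SubP (Pairf P3 (constp 0)))))
     (Comp IszP (Comp IszP (Comp SubP (Pairf P1 (Comp AddP (Pairf P2 P3))))))))
   (\<lambda>z. bv (okc (f1 z) (f2 z) (f3 z)))"
  unfolding okc_def by (rule c_and c_lt c_add c_const | assumption)+

lemmas crules = c_or c_and c_not c_okc c_eq c_lt c_ite c_bitf c_nthb c_pair c_suc c_sub c_add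
  c_nk c_nc c_nx c_ny c_nd1 c_nd2 c_fst c_snd c_id c_const

lemma ex_loc2: "\<exists>P. computes P (\<lambda>R. bv (locchk (pf R) (pf (ps R)) (pf (ps (ps R))) (pf (ps (ps (ps R))))
   (pf (ps (ps (ps (ps R))))) (pf (ps (ps (ps (ps (ps R)))))) (ps (ps (ps (ps (ps (ps R))))))))"
  unfolding locchk_def
  apply (rule exI)
  apply (rule crules)+
  done

definition "Loc2P = (SOME P. computes P (\<lambda>R. bv (locchk (pf R) (pf (ps R)) (pf (ps (ps R))) (pf (ps (ps (ps R))))
   (pf (ps (ps (ps (ps R))))) (pf (ps (ps (ps (ps (ps R)))))) (ps (ps (ps (ps (ps (ps R)))))))))"
lemma c_Loc2: "computes Loc2P (\<lambda>R. bv (locchk (pf R) (pf (ps R)) (pf (ps (ps R))) (pf (ps (ps (ps R))))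
   (pf (ps (ps (ps (ps R))))) (pf (ps (ps (ps (ps (ps R)))))) (ps (ps (ps (ps (ps (ps R))))))))"
  unfolding Loc2P_def by (rule someP[OF ex_loc2])

lemma ex_stage1: "\<exists>P. computes P (\<lambda>z. pe (pf (pf (pf z))) (pe (ps (pf (pf z))) (pe (pf (ps (pf z))) (pe (ps z)
   (pe (nthb (ps (ps (pf z))) (ps z)) (pe (nthb (ps (ps (pf z))) (ps z + nd1 (nthb (ps (ps (pf z))) (ps z))))
     (nthb (ps (ps (pf z))) (ps z + nd2 (nthb (ps (ps (pf z))) (ps z))))))))))"
  apply (rule exI)
  apply (rule crules)+
  done

definition locz :: "nat \<Rightarrow> bool" where
  "locz z = locchk (pf (pf (pf z))) (ps (pf (pf z))) (pf (ps (pf z))) (ps z) (nthb (ps (ps (pf z))) (ps z))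
     (nthb (ps (ps (pf z))) (ps z + nd1 (nthb (ps (ps (pf z))) (ps z))))
     (nthb (ps (ps (pf z))) (ps z + nd2 (nthb (ps (ps (pf z))) (ps z))))"

lemma ex_locz: "\<exists>P. computes P (\<lambda>z. bv (locz z))"
proof -
  obtain S where S: "computes S (\<lambda>z. pe (pf (pf (pf z))) (pe (ps (pf (pf z))) (pe (pf (ps (pf z))) (pe (ps z)
   (pe (nthb (ps (ps (pf z))) (ps z)) (pe (nthb (ps (ps (pf z))) (ps z + nd1 (nthb (ps (ps (pf z))) (ps z))))
     (nthb (ps (ps (pf z))) (ps z + nd2 (nthb (ps (ps (pf z))) (ps z))))))))))"
    using ex_stage1 by blast
  show ?thesis using c_comp[OF c_Loc2 S] unfolding locz_def by auto
qed

definition "LoczP = (SOME P. computes P (\<lambda>z. bv (locz z)))"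
lemma c_Locz: "computes LoczP (\<lambda>z. bv (locz z))" unfolding LoczP_def by (rule someP[OF ex_locz])

lemma validw_alt: "validw (pf (pf v)) (ps (pf v)) (ps v) = (0 < pf (ps v) \<and> ballf locz (pe v (pf (ps v))))"
  by (simp add: validw_def validf_def ballf_def locz_def)

lemma ex_validw: "\<exists>P. computes P (\<lambda>v. bv (validw (pf (pf v)) (ps (pf v)) (ps v)))"
proof -
  have "computes (Comp MulP (Pairf (Comp IszP (Comp IszP (Comp SubP (Pairf (Comp Fst (Comp Snd IdP)) (constp 0)))))
      (Comp (BallP LoczP) (Pairf IdP (Comp Fst (Comp Snd IdP))))))
    (\<lambda>v. bv (0 < pf (ps v) \<and> ballf locz (pe v (pf (ps v)))))"
    by (rule c_and c_lt c_ball[OF c_Locz] c_pair c_fst c_snd c_id c_const)+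
  then show ?thesis unfolding validw_alt by blast
qed

definition "ValidP = (SOME P. computes P (\<lambda>v. bv (validw (pf (pf v)) (ps (pf v)) (ps v))))"
lemma c_Valid: "computes ValidP (\<lambda>v. bv (validw (pf (pf v)) (ps (pf v)) (ps v)))"
  unfolding ValidP_def by (rule someP[OF ex_validw])

lemma c_validw: "computes P1 f1 \<Longrightarrow> computes P2 f2 \<Longrightarrow> computes P3 f3 \<Longrightarrow>
  computes (Comp ValidP (Pairf (Pairf P1 P2) P3)) (\<lambda>z. bv (validw (f1 z) (f2 z) (f3 z)))"
  using c_comp[OF c_Valid c_pair[OF c_pair]] by simp

lemma ex_srchq: "\<exists>P. computes P srchq"
proof -
  have "\<exists>P. computes P (\<lambda>u. if validw (pf (ps (pf u))) (ps (ps (pf u))) (ps u) \<and> nk (nthb (ps (ps u)) 0) = 0 \<and>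
      nc (nthb (ps (ps u)) 0) = pf (pf (pf u)) \<and> nx (nthb (ps (ps u)) 0) = ps (pf (pf u))
     then Suc (ny (nthb (ps (ps u)) 0)) else 0)"
    apply (rule exI)
    apply (rule c_validw crules)+
    done
  then show ?thesis unfolding srchq_def[abs_def] by simp
qed

definition "SrchqP = (SOME P. computes P srchq)"
lemma c_Srchq: "computes SrchqP srchq" unfolding SrchqP_def by (rule someP[OF ex_srchq])

lemma c_srch: "computes P1 f1 \<Longrightarrow> computes P2 f2 \<Longrightarrow> computes P3 f3 \<Longrightarrow> computes P4 f4 \<Longrightarrow> computes P5 f5 \<Longrightarrow>
  \<exists>R. computes R (\<lambda>z. srch (f1 z) (f2 z) (f3 z) (f4 z) (f5 z))"
  unfolding srch_def
  by (rule exI, rule c_first[OF c_Srchq], (rule c_pair c_suc | assumption)+)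

definition "SrchP = (SOME R. computes R (\<lambda>t. srch (pf t) (pf (ps t)) (pf (ps (ps t))) (pf (ps (ps (ps t)))) (ps (ps (ps (ps t))))))"
lemma c_Srch: "computes SrchP (\<lambda>t. srch (pf t) (pf (ps t)) (pf (ps (ps t))) (pf (ps (ps (ps t)))) (ps (ps (ps (ps t)))))"
  unfolding SrchP_def by (rule someP, rule c_srch) (rule c_fst c_snd c_id)+

lemma c_srchf: "computes P1 f1 \<Longrightarrow> computes P2 f2 \<Longrightarrow> computes P3 f3 \<Longrightarrow> computes P4 f4 \<Longrightarrow> computes P5 f5 \<Longrightarrow>
  computes (Comp SrchP (Pairf P1 (Pairf P2 (Pairf P3 (Pairf P4 P5))))) (\<lambda>z. srch (f1 z) (f2 z) (f3 z) (f4 z) (f5 z))"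
  using c_comp[OF c_Srch c_pair[OF _ c_pair[OF _ c_pair[OF _ c_pair]]]] by simp


definition lenstep :: "nat \<Rightarrow> nat" where
  "lenstep w = (if pf w = 0 then w else pe (ps (pf w - 1)) (Suc (ps w)))"

definition lenf :: "nat \<Rightarrow> nat" where "lenf c = ps (iterf lenstep (pe (pe c 0) c))"

lemma lenstep_A: "(lenstep ^^ length s) (pe (scode s) k) = pe 0 (k + length s)"
proof (induction s arbitrary: k)
  case Nil then show ?case by simp
next
  case (Cons b s)
  have "lenstep (pe (scode (b # s)) k) = pe (scode s) (Suc k)" by (simp add: lenstep_def)
  then show ?case using Cons[of "Suc k"] by (simp add: funpow_Suc_right del: funpow.simps)
qed

lemma lenstep_B: "(lenstep ^^ m) (pe 0 k) = pe 0 k"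
  by (induction m) (auto simp: lenstep_def)

lemma scode_ge: "length s \<le> scode s"
proof (induction s)
  case (Cons b s)
  have "scode s \<le> pe x (scode s)" for x by (rule le_prod_encode_2)
  then show ?case using Cons by (simp add: le_SucI order_trans)
qed simp

lemma lenf_scode: "lenf (scode s) = length s"
proof -
  have "scode s = (scode s - length s) + length s" using scode_ge[of s] by simp
  then have "(lenstep ^^ scode s) (pe (scode s) 0) = (lenstep ^^ (scode s - length s)) ((lenstep ^^ length s) (pe (scode s) 0))"
    by (metis funpow_add o_apply)
  also have "\<dots> = pe 0 (length s)" by (simp add: lenstep_A lenstep_B)
  finally show ?thesis by (simp add: lenf_def iterf_def)
qed

lemma scode_Cons_pf: "pf (scode (b # s) - 1) = bv b"
  by (simp add: bv_def)

lemmas crules2 = c_srchf c_pow2 c_mul crules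

lemma ex_lenstep: "\<exists>P. computes P lenstep"
proof -
  have "\<exists>P. computes P (\<lambda>w. if pf w = 0 then w else pe (ps (pf w - 1)) (Suc (ps w)))"
    by (rule exI, (rule crules)+)
  then show ?thesis unfolding lenstep_def[abs_def] by simp
qed
definition "LenstepP = (SOME P. computes P lenstep)"
lemma c_Lenstep: "computes LenstepP lenstep" unfolding LenstepP_def by (rule someP[OF ex_lenstep])

lemma c_lenf: "computes Q g \<Longrightarrow> \<exists>P. computes P (\<lambda>z. lenf (g z))"
  unfolding lenf_def by (rule exI, (rule c_iter[OF c_Lenstep] c_pair c_snd c_const | assumption)+)

definition "LenP = (SOME P. computes P lenf)"
lemma c_Len: "computes LenP lenf"
  unfolding LenP_def by (rule someP) (use c_lenf[OF c_id] in simp)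
lemma c_len: "computes Q g \<Longrightarrow> computes (Comp LenP Q) (\<lambda>z. lenf (g z))" by (rule c_comp[OF c_Len])

section \<open>The diagonal tree\<close>

definition fo :: "nat \<Rightarrow> nat \<Rightarrow> nat \<Rightarrow> nat" where "fo fe x L = srch L fe x L 0"

definition cntf :: "nat \<Rightarrow> nat \<Rightarrow> nat \<Rightarrow> nat" where
  "cntf ph L b = countf (\<lambda>u. srch (pf (pf u)) (ps (pf u)) 0 (pf (pf u)) (ps u) = Suc b) (pe (pe L ph) (2 ^ L))"

definition condv :: "nat \<Rightarrow> nat \<Rightarrow> nat \<Rightarrow> nat" where
  "condv fe x L = (if fo fe x L = 0 then 0
     else if 2 ^ L < 4 * cntf (ps (fo fe x L - 1)) L 0 then 1
     else if 2 ^ L < 4 * cntf (ps (fo fe x L - 1)) L 1 then 2 else 0)"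

definition memf :: "nat \<Rightarrow> nat \<Rightarrow> nat \<Rightarrow> nat" where
  "memf fe e c = bv (firstf (\<lambda>u. condv fe (pe (pf u) (pe 3 4)) (ps u)) (pe e (lenf c)) = 0 \<or>
       pf (c - 1) \<noteq> firstf (\<lambda>u. condv fe (pe (pf u) (pe 3 4)) (ps u)) (pe e (lenf c)) - 1)"

lemma c_cntf: "computes P1 f1 \<Longrightarrow> computes P2 f2 \<Longrightarrow> \<exists>R. computes R (\<lambda>z. cntf (f1 z) (f2 z) b)"
  unfolding cntf_def
  by (rule exI, (rule c_count crules2 | assumption)+)

definition "Cnt0P = (SOME R. computes R (\<lambda>v. cntf (pf v) (ps v) 0))"
definition "Cnt1P = (SOME R. computes R (\<lambda>v. cntf (pf v) (ps v) 1))"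
lemma c_Cnt0: "computes Cnt0P (\<lambda>v. cntf (pf v) (ps v) 0)"
  unfolding Cnt0P_def by (rule someP, rule c_cntf[OF c_Fst c_Snd])
lemma c_Cnt1: "computes Cnt1P (\<lambda>v. cntf (pf v) (ps v) 1)"
  unfolding Cnt1P_def by (rule someP, rule c_cntf[OF c_Fst c_Snd])
lemma c_cnt0: "computes P f \<Longrightarrow> computes Q g \<Longrightarrow> computes (Comp Cnt0P (Pairf P Q)) (\<lambda>z. cntf (f z) (g z) 0)"
  using c_comp[OF c_Cnt0 c_pair] by simp
lemma c_cnt1: "computes P f \<Longrightarrow> computes Q g \<Longrightarrow> computes (Comp Cnt1P (Pairf P Q)) (\<lambda>z. cntf (f z) (g z) 1)"
  using c_comp[OF c_Cnt1 c_pair] by simp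

lemma ex_mem: "\<exists>M. computes M (\<lambda>v. memf fe (pf v) (ps v))"
  unfolding memf_def condv_def fo_def
  by (rule exI, (rule c_first c_len c_cnt0 c_cnt1 crules2)+)


lemma ex_encconst: "\<exists>P. computes P (\<lambda>n. enc (constp n))"
proof -
  have "computes (Comp (Rec (constp (pe 0 0)) (Comp (Pairf (constp 6) (Pairf (constp (pe 1 0)) (Comp Snd (Comp Snd IdP)))) IdP)) (Pairf (constp 0) IdP))
     (\<lambda>z. recfn (\<lambda>_. pe 0 0) (\<lambda>w. pe 6 (pe (pe 1 0) (ps (ps w)))) 0 z)"
    by (rule c_recz c_const c_comp c_pair c_snd c_id)+
  moreover have "recfn (\<lambda>_. pe 0 0) (\<lambda>w. pe 6 (pe (pe 1 0) (ps (ps w)))) 0 z = enc (constp z)" for z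
    by (induction z) auto
  ultimately show ?thesis by (auto intro: computes_cong)
qed

definition "EncConstP = (SOME P. computes P (\<lambda>n. enc (constp n)))"
lemma c_EncConst: "computes EncConstP (\<lambda>n. enc (constp n))"
  unfolding EncConstP_def by (rule someP[OF ex_encconst])
lemma c_encconst: "computes Q g \<Longrightarrow> computes (Comp EncConstP Q) (\<lambda>z. enc (constp (g z)))"
  by (rule c_comp[OF c_EncConst])

lemma quine:
  assumes M: "computes M f"
  shows "\<exists>p. computes p (\<lambda>c. f (pe (enc p) c))"
proof -
  have "\<exists>D. computes D (\<lambda>n. pe 6 (pe (enc M) (pe 5 (pe (pe 6 (pe n (enc (constp n)))) (enc IdP)))))"
    by (rule exI, (rule c_encconst c_pair c_id c_const)+)
  then obtain D where D: "computes D (\<lambda>n. pe 6 (pe (enc M) (pe 5 (pe (pe 6 (pe n (enc (constp n)))) (enc IdP)))))"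
    by blast
  define p where "p = Comp M (Pairf (Comp D (constp (enc D))) IdP)"
  have "computes (Comp D (constp (enc D))) (\<lambda>z. pe 6 (pe (enc M) (pe 5 (pe (pe 6 (pe (enc D) (enc (constp (enc D))))) (enc IdP)))))"
    using c_comp[OF D c_const] by simp
  moreover have "pe 6 (pe (enc M) (pe 5 (pe (pe 6 (pe (enc D) (enc (constp (enc D))))) (enc IdP)))) = enc p"
    by (simp add: p_def)
  ultimately have "computes (Comp D (constp (enc D))) (\<lambda>z. enc p)" by simp
  then have "computes p (\<lambda>c. f (pe (enc p) c))"
    unfolding p_def[symmetric] using c_comp[OF M c_pair[OF _ c_id]] unfolding p_def by blast
  then show ?thesis by blast
qed


section \<open>Measure facts on Cantor space\<close>

abbreviation "bern \<equiv> measure_pmf (bernoulli_pmf (1/2))"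

lemma coin_prob: "prob_space coin"
  unfolding coin_def by (rule prob_space_PiM) (rule prob_space_measure_pmf)

interpretation C: prob_space coin by (rule coin_prob)

lemma space_coin: "space coin = UNIV"
  unfolding coin_def space_PiM by (simp add: PiE_def extensional_def)

definition cyl :: "bool list \<Rightarrow> (nat \<Rightarrow> bool) set" where
  "cyl l = {A. map A [0..<length l] = l}"

lemma cyl_alt: "cyl l = {A. \<forall>q<length l. A q = l ! q}"
proof -
  have "map A [0..<length l] = l \<longleftrightarrow> (\<forall>q<length l. A q = l ! q)" for A
  proof
    assume "map A [0..<length l] = l"
    then show "\<forall>q<length l. A q = l ! q" by (metis add_0 diff_zero length_upt nth_map nth_upt)
  next
    assume "\<forall>q<length l. A q = l ! q"
    then show "map A [0..<length l] = l" by (intro nth_equalityI) auto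
  qed
  then show ?thesis unfolding cyl_def by blast
qed

lemma cyl_emb: "cyl l = prod_emb UNIV (\<lambda>_. bern) {..<length l} (PiE {..<length l} (\<lambda>q. {l ! q}))"
proof (rule set_eqI)
  fix A :: "nat \<Rightarrow> bool"
  have "A \<in> prod_emb UNIV (\<lambda>_. bern) {..<length l} (PiE {..<length l} (\<lambda>q. {l ! q})) \<longleftrightarrow>
      restrict A {..<length l} \<in> PiE {..<length l} (\<lambda>q. {l ! q})"
    unfolding prod_emb_def space_PiM by (simp add: PiE_def extensional_def)
  also have "\<dots> \<longleftrightarrow> (\<forall>q\<in>{..<length l}. A q \<in> {l ! q})" by (rule restrict_PiE_iff)
  also have "\<dots> \<longleftrightarrow> A \<in> cyl l" unfolding cyl_alt by auto
  finally show "A \<in> cyl l \<longleftrightarrow> A \<in> prod_emb UNIV (\<lambda>_. bern) {..<length l} (PiE {..<length l} (\<lambda>q. {l ! q}))" by blast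
qed

lemma emeasure_cyl: "emeasure coin (cyl l) = ennreal ((1/2) ^ length l)"
proof -
  have "emeasure coin (cyl l) = (\<Prod>q\<in>{..<length l}. emeasure bern {l ! q})"
    unfolding cyl_emb coin_def
    by (rule emeasure_PiM_emb) (auto intro: prob_space_measure_pmf)
  also have "\<dots> = (\<Prod>q\<in>{..<length l}. ennreal (1/2))"
  proof (rule prod.cong)
    fix q show "emeasure bern {l ! q} = ennreal (1/2)"
      by (cases "l ! q") (auto simp: emeasure_pmf_single)
  qed simp
  also have "\<dots> = ennreal (1/2) ^ length l" by (subst prod_constant) simp
  also have "\<dots> = ennreal ((1/2) ^ length l)" by (rule ennreal_power) simp
  finally show ?thesis .
qed

lemma cyl_sets: "cyl l \<in> sets coin"
proof (rule ccontr)
  assume "cyl l \<notin> sets coin"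
  then have "emeasure coin (cyl l) = 0" by (rule emeasure_notin_sets)
  moreover have "(1/2::real) ^ length l > 0" by simp
  ultimately show False using emeasure_cyl[of l] by simp
qed

lemma measure_cyl: "measure coin (cyl l) = (1/2) ^ length l"
  using emeasure_cyl[of l] by (simp add: C.emeasure_eq_measure)

lemma pre_eq_Union: "{A. map A [0..<L] \<in> Z} = (\<Union>l\<in>Z \<inter> {l. length l = L}. cyl l)"
proof (rule set_eqI)
  fix A
  show "A \<in> {A. map A [0..<L] \<in> Z} \<longleftrightarrow> A \<in> (\<Union>l\<in>Z \<inter> {l. length l = L}. cyl l)"
  proof
    assume "A \<in> {A. map A [0..<L] \<in> Z}"
    then have "map A [0..<L] \<in> Z \<inter> {l. length l = L}" "A \<in> cyl (map A [0..<L])" by (simp_all add: cyl_def)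
    then show "A \<in> (\<Union>l\<in>Z \<inter> {l. length l = L}. cyl l)" by blast
  next
    assume "A \<in> (\<Union>l\<in>Z \<inter> {l. length l = L}. cyl l)"
    then obtain l where "l \<in> Z" "length l = L" "A \<in> cyl l" by blast
    then show "A \<in> {A. map A [0..<L] \<in> Z}" by (simp add: cyl_def)
  qed
qed

lemma finite_lists_len: "finite {l :: bool list. length l = L}"
proof -
  have "{l :: bool list. length l = L} = {l. set l \<subseteq> UNIV \<and> length l = L}" by auto
  then show ?thesis using finite_lists_length_eq[of "UNIV :: bool set" L] by simp
qed

lemma pre_sets: "{A. map A [0..<L] \<in> Z} \<in> sets coin"
  unfolding pre_eq_Union
proof (rule sets.finite_UN)
  show "finite (Z \<inter> {l. length l = L})" by (rule finite_subset[OF _ finite_lists_len[of L]]) blast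
qed (rule cyl_sets)

lemma measure_pre: "measure coin {A. map A [0..<L] \<in> Z} = card (Z \<inter> {l. length l = L}) / 2 ^ L"
proof -
  have fin: "finite (Z \<inter> {l. length l = L})" by (rule finite_subset[OF _ finite_lists_len[of L]]) blast
  have "measure coin {A. map A [0..<L] \<in> Z} = (\<Sum>l\<in>Z \<inter> {l. length l = L}. measure coin (cyl l))"
    unfolding pre_eq_Union
  proof (rule C.finite_measure_finite_Union[OF fin])
    show "cyl ` (Z \<inter> {l. length l = L}) \<subseteq> C.events" using cyl_sets by blast
    show "disjoint_family_on cyl (Z \<inter> {l. length l = L})"
      unfolding disjoint_family_on_def cyl_def by auto
  qed
  also have "\<dots> = (\<Sum>l\<in>Z \<inter> {l. length l = L}. (1/2) ^ L)"
    by (rule sum.cong) (auto simp: measure_cyl)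
  finally show ?thesis by (simp add: power_one_over)
qed

primrec codeL :: "bool list \<Rightarrow> nat" where
  "codeL [] = 0"
| "codeL (b # l) = bv b + 2 * codeL l"

primrec decL :: "nat \<Rightarrow> nat \<Rightarrow> bool list" where
  "decL 0 i = []"
| "decL (Suc L) i = (i mod 2 = 1) # decL L (i div 2)"

lemma length_decL[simp]: "length (decL L i) = L" by (induction L arbitrary: i) auto

lemma codeL_decL: "codeL (decL L i) = i mod 2 ^ L"
proof (induction L arbitrary: i)
  case (Suc L)
  have "i mod 2 ^ Suc L = 2 * (i div 2 mod 2 ^ L) + i mod 2"
    using mod_mult2_eq[of i 2 "2 ^ L"] by simp
  then show ?case using Suc by (auto simp: bv_def)
qed simp

lemma decL_codeL: "decL (length l) (codeL l) = l"
  by (induction l) (auto simp: bv_def)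

lemma codeL_less: "codeL l < 2 ^ length l"
  by (induction l) (auto simp: bv_def)

lemma bitf_codeL: "q < length l \<Longrightarrow> bitf (codeL l) q = bv (l ! q)"
proof (induction l arbitrary: q)
  case (Cons b l)
  show ?case
  proof (cases q)
    case 0 then show ?thesis by (auto simp: bitf_def bv_def)
  next
    case (Suc q')
    have d2: "(bv b + 2 * codeL l) div 2 = codeL l" by (simp add: bv_def)
    have "(bv b + 2 * codeL l) div 2 ^ Suc q' = (bv b + 2 * codeL l) div 2 div 2 ^ q'"
      by (simp add: div_mult2_eq)
    then have "(bv b + 2 * codeL l) div 2 ^ Suc q' = codeL l div 2 ^ q'" using d2 by simp
    then show ?thesis using Cons Suc by (simp add: bitf_def)
  qed
qed simp

lemma card_codes: "card {l. length l = L \<and> P (codeL l)} = card {i. i < 2 ^ L \<and> P i}"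
proof -
  have "bij_betw codeL {l. length l = L \<and> P (codeL l)} {i. i < 2 ^ L \<and> P i}"
  proof (rule bij_betw_byWitness[where f'="decL L"])
    show "\<forall>a\<in>{l. length l = L \<and> P (codeL l)}. decL L (codeL a) = a"
    proof
      fix a assume "a \<in> {l. length l = L \<and> P (codeL l)}"
      then have "length a = L" by blast
      then show "decL L (codeL a) = a" using decL_codeL[of a] by simp
    qed
    show "\<forall>a'\<in>{i. i < 2 ^ L \<and> P i}. codeL (decL L a') = a'"
    proof
      fix a' assume "a' \<in> {i. i < 2 ^ L \<and> P i}"
      then have "a' < 2 ^ L" by blast
      then show "codeL (decL L a') = a'" by (simp add: codeL_decL)
    qed
    show "codeL ` {l. length l = L \<and> P (codeL l)} \<subseteq> {i. i < 2 ^ L \<and> P i}"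
    proof
      fix x assume "x \<in> codeL ` {l. length l = L \<and> P (codeL l)}"
      then obtain l where "length l = L" "P (codeL l)" "x = codeL l" by blast
      then show "x \<in> {i. i < 2 ^ L \<and> P i}" using codeL_less[of l] by simp
    qed
    show "decL L ` {i. i < 2 ^ L \<and> P i} \<subseteq> {l. length l = L \<and> P (codeL l)}"
    proof
      fix x assume "x \<in> decL L ` {i. i < 2 ^ L \<and> P i}"
      then obtain i where "i < 2 ^ L" "P i" "x = decL L i" by blast
      then show "x \<in> {l. length l = L \<and> P (codeL l)}" by (simp add: codeL_decL)
    qed
  qed
  then show ?thesis by (rule bij_betw_same_card)
qed

lemma measure_code: "measure coin {A. P (codeL (map A [0..<L]))} = card {i. i < 2 ^ L \<and> P i} / 2 ^ L"
proof -
  have "{A. P (codeL (map A [0..<L]))} = {A. map A [0..<L] \<in> {l. P (codeL l)}}" by simp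
  also have "measure coin \<dots> = card ({l. P (codeL l)} \<inter> {l. length l = L}) / 2 ^ L" by (rule measure_pre)
  also have "{l. P (codeL l)} \<inter> {l. length l = L} = {l. length l = L \<and> P (codeL l)}" by auto
  finally show ?thesis by (simp add: card_codes)
qed

lemma code_sets: "{A. P (codeL (map A [0..<L]))} \<in> sets coin"
  using pre_sets[of L "{l. P (codeL l)}"] by simp

lemma measure_first: "measure coin {A. A 0 = v} = 1/2"
proof -
  have "{A. A 0 = v} = cyl [v]" by (auto simp: cyl_def)
  then show ?thesis by (simp add: measure_cyl)
qed

lemma first_sets: "{A. A 0 = v} \<in> sets coin"
proof -
  have "{A. A 0 = v} = cyl [v]" by (auto simp: cyl_def)
  then show ?thesis by (simp add: cyl_sets)
qed


lemma firstn_none: "(\<forall>m<n. q (pe a m) = 0) \<Longrightarrow> firstn q a n = 0"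
  by (induction n) auto

lemma firstn_least: "q (pe a L0) \<noteq> 0 \<Longrightarrow> (\<forall>m<L0. q (pe a m) = 0) \<Longrightarrow>
   firstn q a n = (if L0 < n then q (pe a L0) else 0)"
proof (induction n)
  case (Suc n)
  then show ?case by (auto simp: less_Suc_eq)
qed simp

lemma loc_orc_mono:
  assumes "locchk L i len j nd c1 c2" "\<forall>q<L. bitf i q = bitf i' q" "L \<le> L'"
  shows "locchk L' i' len j nd c1 c2"
  using assms(1) unfolding locchk_def
  apply (elim disjE conjE)
  using assms(2,3) by simp_all

lemma validw_mono: "validw L i w \<Longrightarrow> \<forall>q<L. bitf i q = bitf i' q \<Longrightarrow> L \<le> L' \<Longrightarrow> validw L' i' w"
  unfolding validw_def validf_def using loc_orc_mono by blast

lemma srch_mono2: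
  assumes s: "srch k c x L i = Suc y" and co: "consist A L i" "consist A L' i'" and LL: "L \<le> L'" "k \<le> k'"
    and e: "enc p = c"
  shows "srch k' c x L' i' = Suc y"
proof -
  obtain m where m: "m < Suc k" "srchq (pe (pe (pe c x) (pe L i)) m) = Suc y"
    using firstn_nz[of srchq "pe (pe c x) (pe L i)" "Suc k"] s by (auto simp: srch_def firstf_def)
  have bits: "\<forall>q<L. bitf i q = bitf i' q" using co LL by (auto simp: consist_def)
  from m have "validw L i m" by (simp add: srchq_def split: if_splits)
  then have "validw L' i' m" using validw_mono bits LL by blast
  then have "srchq (pe (pe (pe c x) (pe L' i')) m) \<noteq> 0" using m(2) by (simp add: srchq_def split: if_splits)
  then have "srch k' c x L' i' \<noteq> 0"
    using firstn_ex[of srchq "pe (pe c x) (pe L' i')" m "Suc k'"] m LL by (auto simp: srch_def firstf_def)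
  then obtain y' where y': "srch k' c x L' i' = Suc y'" by (cases "srch k' c x L' i'") auto
  have "eval A p x y'" using srch_sound[OF y' co(2) e] .
  moreover have "eval A p x y" using srch_sound[OF s co(1) e] .
  ultimately show ?thesis using y' eval_det by blast
qed

lemma consist_code: "consist A L (codeL (map A [0..<L]))"
  unfolding consist_def by (simp add: bitf_codeL)

lemma consist_false: "consist (\<lambda>_. False) L 0"
  unfolding consist_def by (simp add: bitf_def)

lemma memf_bv: "memf fe e c = (if memf fe e c = 1 then 1 else 0)"
  unfolding memf_def by (simp add: bv_def)


lemma cv_le2: "condv fe x L \<le> 2" unfolding condv_def by auto

lemma paths_UNIV: "paths UNIV = UNIV" by (simp add: paths_def)

lemma map_upt_Suc_hd: "0 < n \<Longrightarrow> map A [0..<n] \<noteq> [] \<and> hd (map A [0..<n]) = A 0"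
  by (simp add: upt_conv_Cons)

lemma treeB_paths:
  assumes T: "T = {s. length s \<le> L0 \<or> (s \<noteq> [] \<and> bv (hd s) \<noteq> v)}"
  shows "paths T = {A. bv (A 0) \<noteq> v}"
proof (rule set_eqI)
  fix A
  show "A \<in> paths T \<longleftrightarrow> A \<in> {A. bv (A 0) \<noteq> v}"
  proof
    assume "A \<in> paths T"
    then have "\<forall>n. map A [0..<n] \<in> T" by (simp add: paths_def)
    then have "map A [0..<Suc L0] \<in> T" by (rule spec)
    then show "A \<in> {A. bv (A 0) \<noteq> v}" using T map_upt_Suc_hd[of "Suc L0" A] by (auto simp del: upt_Suc)
  next
    assume a: "A \<in> {A. bv (A 0) \<noteq> v}"
    show "A \<in> paths T" unfolding paths_def
    proof (intro CollectI allI)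
      fix n
      show "map A [0..<n] \<in> T"
      proof (cases "n \<le> L0")
        case True then show ?thesis using T by simp
      next
        case False then show ?thesis using T a map_upt_Suc_hd[of n A] by (auto simp del: upt_Suc)
      qed
    qed
  qed
qed

lemma treeB_tree:
  assumes T: "T = {s. length s \<le> L0 \<or> (s \<noteq> [] \<and> bv (hd s) \<noteq> v)}"
  shows "is_tree T"
  unfolding is_tree_def
proof (intro allI impI)
  fix s t assume st: "s @ t \<in> T"
  show "s \<in> T"
  proof (cases "length s \<le> L0")
    case True then show ?thesis using T by simp
  next
    case False
    then have "s \<noteq> []" by auto
    moreover have "s @ t \<noteq> [] \<and> bv (hd (s @ t)) \<noteq> v" using st T False by auto
    ultimately show ?thesis using T by auto
  qed
qed

lemma measure_bv_ne:
  assumes "v \<le> 1"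
  shows "measure coin {A. bv (A 0) \<noteq> v} = 1/2"
proof -
  have e: "{A. bv (A 0) \<noteq> v} = {A. A 0 = (v = 0)}" using assms by (auto simp: bv_def)
  show ?thesis by (subst e) (rule measure_first)
qed

lemma measure_UNIV_coin: "measure coin UNIV = 1"
  using C.prob_space space_coin by simp


theorem proposition4p5:
  shows "\<not> (\<exists>F::recf. \<forall>pT T a b.
            decides pT T \<and> is_tree T \<and> tree_measure T > 0 \<and> 0 < a \<and> a < b \<longrightarrow>
            (\<exists>pS pPhi S. eval0 F (prod_encode (enc pT, prod_encode (a, b)))
                                (prod_encode (enc pS, enc pPhi))
                \<and> decides pS S \<and> is_tree S
                \<and> tree_measure S \<ge> real a / real b
                \<and> (\<forall>A \<in> paths S. \<exists>X \<in> paths T. computes_with_oracle pPhi A X)))"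
proof
  assume "\<exists>F::recf. \<forall>pT T a b.
            decides pT T \<and> is_tree T \<and> tree_measure T > 0 \<and> 0 < a \<and> a < b \<longrightarrow>
            (\<exists>pS pPhi S. eval0 F (prod_encode (enc pT, prod_encode (a, b)))
                                (prod_encode (enc pS, enc pPhi))
                \<and> decides pS S \<and> is_tree S
                \<and> tree_measure S \<ge> real a / real b
                \<and> (\<forall>A \<in> paths S. \<exists>X \<in> paths T. computes_with_oracle pPhi A X))"
  then obtain F where H: "\<And>pT T a b.
            decides pT T \<and> is_tree T \<and> tree_measure T > 0 \<and> 0 < a \<and> a < b \<Longrightarrow>
            (\<exists>pS pPhi S. eval0 F (prod_encode (enc pT, prod_encode (a, b)))
                                (prod_encode (enc pS, enc pPhi))
                \<and> decides pS S \<and> is_tree S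
                \<and> tree_measure S \<ge> real a / real b
                \<and> (\<forall>A \<in> paths S. \<exists>X \<in> paths T. computes_with_oracle pPhi A X))"
    by blast
  define fe where "fe = enc F"
  obtain M where M: "computes M (\<lambda>v. memf fe (pf v) (ps v))" using ex_mem by blast
  obtain p where P0: "computes p (\<lambda>c. memf fe (pf (pe (enc p) c)) (ps (pe (enc p) c)))"
    using quine[OF M] by blast
  have P: "computes p (\<lambda>c. memf fe (enc p) c)" using P0 by simp
  define e where "e = enc p"
  define x0 where "x0 = pe e (pe 3 4)"
  define q where "q = (\<lambda>u. condv fe (pe (pf u) (pe 3 4)) (ps u))"
  define cv where "cv = (\<lambda>L. condv fe x0 L)"
  have qcv: "q (pe e L) = cv L" for L by (simp add: q_def cv_def x0_def)
  define T where "T = {s. memf fe e (scode s) = 1}"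
  have memT: "s \<in> T \<longleftrightarrow> (firstn q e (length s) = 0 \<or> pf (scode s - 1) \<noteq> firstn q e (length s) - 1)" for s
    unfolding T_def memf_def firstf_def q_def by (simp add: lenf_scode bv_def)
  have dec: "decides p T"
    unfolding decides_def eval0_def
  proof
    fix s
    have "eval (\<lambda>_. False) p (scode s) (memf fe (enc p) (scode s))" by (rule computesD[OF P])
    then show "eval (\<lambda>_. False) p (scode s) (if s \<in> T then 1 else 0)"
      using memf_bv[of fe "enc p" "scode s"] unfolding T_def e_def by simp
  qed
  have shapeB: "T = {s. length s \<le> L0 \<or> (s \<noteq> [] \<and> bv (hd s) \<noteq> cv L0 - 1)}"
    if "cv L0 \<noteq> 0" "\<forall>m<L0. cv m = 0" for L0
  proof -
    have fq: "firstn q e n = (if L0 < n then cv L0 else 0)" for n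
      using firstn_least[of q e L0 n] that by (simp add: qcv)
    show ?thesis
    proof (rule set_eqI)
      fix s :: "bool list"
      show "s \<in> T \<longleftrightarrow> s \<in> {s. length s \<le> L0 \<or> (s \<noteq> [] \<and> bv (hd s) \<noteq> cv L0 - 1)}"
      proof (cases s)
        case Nil then show ?thesis using memT fq by simp
      next
        case (Cons b s')
        have f: "firstn q e (length s) = (if L0 < length s then cv L0 else 0)" by (rule fq)
        have p: "pf (scode s - 1) = bv b" using Cons scode_Cons_pf by simp
        have "s \<in> T \<longleftrightarrow> ((if L0 < length s then cv L0 else 0) = 0 \<or> bv b \<noteq> (if L0 < length s then cv L0 else 0) - 1)"
          using memT[of s] unfolding f p .
        then show ?thesis using that(1) Cons by auto
      qed
    qed
  qed
  have shapeA: "T = UNIV" if "\<forall>L. cv L = 0"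
  proof -
    have "firstn q e n = 0" for n using firstn_none[of n q e] that by (simp add: qcv)
    then show ?thesis using memT by auto
  qed
  have treeT: "is_tree T" and measT: "tree_measure T > 0"
  proof -
    have "is_tree T \<and> tree_measure T > 0"
    proof (cases "\<exists>L. cv L \<noteq> 0")
      case False
      then have "T = UNIV" using shapeA by auto
      then show ?thesis by (simp add: is_tree_def tree_measure_def paths_UNIV measure_UNIV_coin)
    next
      case True
      define L0 where "L0 = (LEAST L. cv L \<noteq> 0)"
      have l0: "cv L0 \<noteq> 0" "\<forall>m<L0. cv m = 0" using True unfolding L0_def
        by (auto intro: LeastI_ex dest: not_less_Least)
      have le: "cv L0 - 1 \<le> 1" using cv_le2[of fe x0 L0] by (simp add: cv_def)
      have TB: "T = {s. length s \<le> L0 \<or> (s \<noteq> [] \<and> bv (hd s) \<noteq> cv L0 - 1)}" using shapeB l0 by blast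
      show ?thesis using treeB_tree[OF TB] treeB_paths[OF TB] measure_bv_ne[OF le]
        by (simp add: tree_measure_def)
    qed
    then show "is_tree T" "tree_measure T > 0" by auto
  qed
  obtain pS pPhi S where
    ev: "eval0 F (prod_encode (enc p, prod_encode (3, 4))) (prod_encode (enc pS, enc pPhi))"
    and Smeas: "tree_measure S \<ge> real (3::nat) / real (4::nat)"
    and Spath: "\<forall>A \<in> paths S. \<exists>X \<in> paths T. computes_with_oracle pPhi A X"
    using H[of p T 3 4] dec treeT measT by auto
  define ph where "ph = enc pPhi"
  define y0 where "y0 = pe (enc pS) ph"
  have evF: "eval (\<lambda>_. False) F x0 y0" using ev by (simp add: eval0_def x0_def e_def y0_def ph_def)
  from srch_complete[OF evF] obtain K where
    K0: "\<forall>k L i. K \<le> k \<longrightarrow> K \<le> L \<longrightarrow> consist (\<lambda>_. False) L i \<longrightarrow> srch k (enc F) x0 L i = Suc y0"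
    by (elim exE)
  have K: "fo fe x0 L = Suc y0" if "K \<le> L" for L
    using K0 consist_false[of L] that by (simp add: fo_def fe_def)
  have fo_ok: "y = y0" if "fo fe x0 L = Suc y" for L y
  proof -
    have s: "srch L fe x0 L 0 = Suc y" using that by (simp only: fo_def)
    have "eval (\<lambda>_. False) F x0 y" by (rule srch_sound[OF s consist_false]) (simp add: fe_def)
    then show ?thesis using evF eval_det by blast
  qed
  define E where "E = (\<lambda>L b. {A. srch L ph 0 L (codeL (map A [0..<L])) = Suc b})"
  define G where "G = (\<lambda>b. {A. eval A pPhi 0 b})"
  have Esets: "E L b \<in> sets coin" for L b unfolding E_def by (rule code_sets)
  have cnt_eq: "cntf ph L b = card {i. i < 2 ^ L \<and> srch L ph 0 L i = Suc b}" for L b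
    unfolding cntf_def countf_def countn_card by (simp only: pf_pe ps_pe)
  have Emeas: "measure coin (E L b) = cntf ph L b / 2 ^ L" for L b
    unfolding E_def cnt_eq by (rule measure_code)
  have Esound: "eval A pPhi 0 b" if "A \<in> E L b" for A L b
  proof -
    have s: "srch L ph 0 L (codeL (map A [0..<L])) = Suc b" using that by (simp only: E_def mem_Collect_eq)
    show ?thesis by (rule srch_sound[OF s consist_code]) (simp add: ph_def)
  qed
  have Emono: "E L b \<subseteq> E (Suc L) b" for L b
  proof
    fix A assume "A \<in> E L b"
    then have "srch L ph 0 L (codeL (map A [0..<L])) = Suc b" by (simp add: E_def)
    then have "srch (Suc L) ph 0 (Suc L) (codeL (map A [0..<Suc L])) = Suc b"
      by (rule srch_mono2[OF _ consist_code consist_code]) (simp_all add: ph_def)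
    then show "A \<in> E (Suc L) b" by (simp add: E_def)
  qed
  have Eunion: "(\<Union>L. E L b) = G b" for b
  proof
    show "(\<Union>L. E L b) \<subseteq> G b" using Esound by (auto simp: G_def)
    show "G b \<subseteq> (\<Union>L. E L b)"
    proof
      fix A assume "A \<in> G b"
      then have "eval A pPhi 0 b" by (simp add: G_def)
      from srch_complete[OF this] obtain K' where
        K': "\<forall>k L i. K' \<le> k \<longrightarrow> K' \<le> L \<longrightarrow> consist A L i \<longrightarrow> srch k (enc pPhi) 0 L i = Suc b"
        by (elim exE)
      then have "A \<in> E K' b" using consist_code[of A K'] by (simp add: E_def ph_def)
      then show "A \<in> (\<Union>L. E L b)" by blast
    qed
  qed
  have Gsets: "G b \<in> sets coin" for b
    unfolding Eunion[symmetric] using Esets by blast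
  have lim: "(\<lambda>L. measure coin (E L b)) \<longlonglongrightarrow> measure coin (G b)" for b
  proof -
    have inc: "incseq (\<lambda>L. E L b)" by (rule incseq_SucI) (rule Emono)
    have rng: "range (\<lambda>L. E L b) \<subseteq> sets coin" using Esets by blast
    show ?thesis unfolding Eunion[symmetric] by (rule C.finite_Lim_measure_incseq[OF rng inc])
  qed
  define PS where "PS = paths S"
  have PSm: "measure coin PS \<ge> 3/4" using Smeas by (simp add: tree_measure_def PS_def)
  have PSsets: "PS \<in> sets coin"
  proof (rule ccontr)
    assume "PS \<notin> sets coin"
    then have "measure coin PS = 0" by (rule measure_notin_sets)
    with PSm show False by simp
  qed
  have PSsub: "PS \<subseteq> G 0 \<union> G 1"
  proof
    fix A assume "A \<in> PS"
    then obtain X where "X \<in> paths T" "computes_with_oracle pPhi A X" using Spath by (auto simp: PS_def)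
    then have "eval A pPhi 0 (if X 0 then 1 else 0)" by (simp add: computes_with_oracle_def)
    then show "A \<in> G 0 \<union> G 1" by (cases "X 0") (auto simp: G_def)
  qed
  have "measure coin PS \<le> measure coin (G 0 \<union> G 1)"
    using PSsub Gsets by (intro C.finite_measure_mono) auto
  also have "\<dots> \<le> measure coin (G 0) + measure coin (G 1)"
    using Gsets by (intro measure_subadditive) (auto simp: C.emeasure_eq_measure)
  finally have "measure coin (G 0) + measure coin (G 1) \<ge> 3/4" using PSm by linarith
  then obtain b where b: "b \<le> 1" "measure coin (G b) > 1/4"
  proof (cases "measure coin (G 0) > 1/4")
    case True
    then show ?thesis using that[of 0] by simp
  next
    case False
    then have "measure coin (G 1) > 1/4" using \<open>measure coin (G 0) + measure coin (G 1) \<ge> 3/4\<close> by linarith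
    then show ?thesis using that[of 1] by simp
  qed
  obtain L1 where L1: "\<And>L. L1 \<le> L \<Longrightarrow> measure coin (E L b) > 1/4"
    using order_tendstoD(1)[OF lim b(2)] unfolding eventually_sequentially by blast
  define L2 where "L2 = max K L1"
  have foL2: "fo fe x0 L2 = Suc y0" using K by (simp add: L2_def)
  have psL2: "ps (fo fe x0 L2 - 1) = ph" using foL2 by (simp add: y0_def)
  have "measure coin (E L2 b) > 1/4" using L1 by (simp add: L2_def)
  then have "1/4 < real (cntf ph L2 b) / 2 ^ L2" by (simp only: Emeas)
  then have "(2::real) ^ L2 < 4 * real (cntf ph L2 b)" by (simp add: field_simps)
  then have c2: "2 ^ L2 < 4 * cntf ph L2 b"
    by (metis of_nat_less_iff of_nat_mult of_nat_numeral of_nat_power)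
  have cvL2: "cv L2 = (if 2 ^ L2 < 4 * cntf ph L2 0 then 1 else if 2 ^ L2 < 4 * cntf ph L2 1 then 2 else 0)"
    using foL2 psL2 by (simp add: cv_def condv_def)
  have "b = 0 \<or> b = 1" using b(1) by auto
  then have "cv L2 \<noteq> 0" using c2 unfolding cvL2 by auto
  then have exL: "\<exists>L. cv L \<noteq> 0" by blast
  define L0 where "L0 = (LEAST L. cv L \<noteq> 0)"
  have l0: "cv L0 \<noteq> 0" "\<forall>m<L0. cv m = 0" using exL unfolding L0_def
    by (auto intro: LeastI_ex dest: not_less_Least)
  define bb where "bb = cv L0 - 1"
  have bb1: "bb \<le> 1" using cv_le2[of fe x0 L0] by (simp add: cv_def bb_def)
  have TB: "T = {s. length s \<le> L0 \<or> (s \<noteq> [] \<and> bv (hd s) \<noteq> bb)}" using shapeB l0 by (simp add: bb_def)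
  have pT: "paths T = {A. bv (A 0) \<noteq> bb}" by (rule treeB_paths[OF TB])
  have fo0: "fo fe x0 L0 \<noteq> 0" using l0(1) by (auto simp: cv_def condv_def split: if_splits)
  then obtain y where "fo fe x0 L0 = Suc y" by (cases "fo fe x0 L0") auto
  then have fo0': "fo fe x0 L0 = Suc y0" using fo_ok by blast
  have psL0: "ps (fo fe x0 L0 - 1) = ph" using fo0' by (simp add: y0_def)
  have cvL0: "cv L0 = (if 2 ^ L0 < 4 * cntf ph L0 0 then 1 else if 2 ^ L0 < 4 * cntf ph L0 1 then 2 else 0)"
    using fo0' psL0 by (simp add: cv_def condv_def)
  have big: "2 ^ L0 < 4 * cntf ph L0 bb"
  proof (cases "2 ^ L0 < 4 * cntf ph L0 0")
    case True
    then have "bb = 0" unfolding bb_def cvL0 by simp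
    then show ?thesis using True by simp
  next
    case False
    then have "2 ^ L0 < 4 * cntf ph L0 1" "bb = 1" using l0(1) unfolding bb_def cvL0 by (auto split: if_splits)
    then show ?thesis by simp
  qed
  have "real (2 ^ L0) < real (4 * cntf ph L0 bb)" using big by (simp only: of_nat_less_iff)
  then have "(2::real) ^ L0 < 4 * real (cntf ph L0 bb)" by simp
  then have Ebig: "measure coin (E L0 bb) > 1/4" unfolding Emeas by (simp add: field_simps)
  have disj: "PS \<subseteq> UNIV - E L0 bb"
  proof
    fix A assume "A \<in> PS"
    then obtain X where X: "X \<in> paths T" "computes_with_oracle pPhi A X" using Spath by (auto simp: PS_def)
    then have e1: "eval A pPhi 0 (bv (X 0))" by (simp add: computes_with_oracle_def bv_def)
    have ne: "bv (X 0) \<noteq> bb" using X(1) pT by simp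
    have "A \<notin> E L0 bb"
    proof
      assume "A \<in> E L0 bb"
      then have "eval A pPhi 0 bb" by (rule Esound)
      with e1 ne eval_det show False by blast
    qed
    then show "A \<in> UNIV - E L0 bb" by simp
  qed
  have cs: "UNIV - E L0 bb \<in> sets coin"
    using sets.compl_sets[OF Esets[of L0 bb]] space_coin by simp
  have "measure coin PS \<le> measure coin (UNIV - E L0 bb)"
    using disj cs by (rule C.finite_measure_mono)
  also have "\<dots> = 1 - measure coin (E L0 bb)"
    using C.prob_compl[of "E L0 bb"] Esets space_coin by simp
  finally show False using PSm Ebig by linarith
qed


end
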